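(* Let $\Gamma$ and $\Lambda$ be finitely generated groups with polynomial growth of degree $b$ and $a$ respectively, where $b>a$. Then there is no $(\mathrm{L}^{a/b},\mathrm{L}^0)$ measure equivalence coupling from $\Gamma$ to $\Lambda$.
   Context: A finitely generated group has polynomial growth of degree $d$ if its volume growth $V(n)$ (the number of elements of word length at most $n$ for a finite generating set) satisfies $V(x)\approx x^d$, where $f\approx g$ means that there exist $C,C'>0$ with $f(x)=O(g(Cx))$ and $g(x)=O(f(C'x))$ as $x\to+\infty$. Measure equivalence coupling between countable groups $\Gamma,\Lambda$: a quadruple $(\Omega,X_\Gamma,X_\Lambda,\mu)$ where $(\Omega,\mu)$ is a standard Borel measure space with commuting, free, measure-preserving actions $\gamma\ast x$, $\lambda\ast x$ of $\Gamma$ and $\Lambda$, and $X_\Gamma$ (resp. $X_\Lambda$) is a Borel fundamental domain of finite measure for the $\Gamma$-action (resp. $\Lambda$-action). For $\gamma\in\Gamma$, $x\in X_\Lambda$, $\gamma\cdot x$ is the unique point of $(\Lambda\ast\gamma\ast x)\cap X_\Lambda$ and the cocycle $c_{\Lambda,\Gamma}\colon\Gamma\times X_\Lambda\to\Lambda$ is defined by $c_{\Lambda,\Gamma}(\gamma,x)\ast\gamma\ast x=\gamma\cdot x$. An $(\mathrm{L}^p,\mathrm{L}^0)$ measure equivalence coupling from $\Gamma$ to $\Lambda$ is one where, for every $\gamma\in\Gamma$, $x\mapsto|c_{\Lambda,\Gamma}(\gamma,x)|_{S_\Lambda}$ lies in $\mathrm{L}^p(X_\Lambda,\mu)$ ($|\cdot|_{S_\Lambda}$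 the word length for a finite generating set of $\Lambda$); no requirement is made on the other cocycle. *)

theory Defs
  imports "HOL-Analysis.Analysis" "HOL-Probability.Probability" "HOL-Algebra.Generated_Groups"
    "HOL-Library.Landau_Symbols"
begin

definition fin_gen_set :: "('a, 'c) monoid_scheme \<Rightarrow> 'a set \<Rightarrow> bool" where
  "fin_gen_set G S \<longleftrightarrow> finite S \<and> S \<subseteq> carrier G \<and> generate G S = carrier G"

definition word_len :: "('a, 'c) monoid_scheme \<Rightarrow> 'a set \<Rightarrow> 'a \<Rightarrow> nat" where
  "word_len G S g = (LEAST n. \<exists>xs. length xs = n \<and> set xs \<subseteq> S \<union> (\<lambda>s. inv\<^bsub>G\<^esub> s) ` S
                        \<and> foldr (\<lambda>x y. x \<otimes>\<^bsub>G\<^esub> y) xs \<one>\<^bsub>G\<^esub> = g)"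

definition growth :: "('a, 'c) monoid_scheme \<Rightarrow> 'a set \<Rightarrow> real \<Rightarrow> real" where
  "growth G S x = real (card {g \<in> carrier G. real (word_len G S g) \<le> x})"

definition asymp_dominated :: "(real \<Rightarrow> real) \<Rightarrow> (real \<Rightarrow> real) \<Rightarrow> bool" where
  "asymp_dominated f g \<longleftrightarrow> (\<exists>C>0. f \<in> O[at_top](\<lambda>x. g (C * x)))"

definition asymp_approx :: "(real \<Rightarrow> real) \<Rightarrow> (real \<Rightarrow> real) \<Rightarrow> bool" where
  "asymp_approx f g \<longleftrightarrow> asymp_dominated f g \<and> asymp_dominated g f"

definition poly_growth_deg :: "('a, 'c) monoid_scheme \<Rightarrow> real \<Rightarrow> bool" where
  "poly_growth_deg G d \<longleftrightarrow> (\<exists>S. fin_gen_set G S \<and> asymp_approx (growth G S) (\<lambda>x. x powr d))"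

text \<open>Standard Borel space: Borel isomorphic to a Borel subset of the real line
  (equivalently of a Polish space, by Kuratowski's theorem).\<close>
definition standard_borel :: "'w measure \<Rightarrow> bool" where
  "standard_borel M \<longleftrightarrow> (\<exists>(A::real set) f g. A \<in> sets borel \<and>
      f \<in> M \<rightarrow>\<^sub>M restrict_space borel A \<and> g \<in> restrict_space borel A \<rightarrow>\<^sub>M M \<and>
      (\<forall>x\<in>space M. g (f x) = x) \<and> (\<forall>y\<in>A. f (g y) = y))"

definition mp_action :: "('a, 'c) monoid_scheme \<Rightarrow> 'w measure \<Rightarrow> ('a \<Rightarrow> 'w \<Rightarrow> 'w) \<Rightarrow> bool" where
  "mp_action G M act \<longleftrightarrow>
     (\<forall>g\<in>carrier G. act g \<in> M \<rightarrow>\<^sub>M M \<and> distr M M (act g) = M) \<and>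
     (\<forall>w\<in>space M. act \<one>\<^bsub>G\<^esub> w = w) \<and>
     (\<forall>g\<in>carrier G. \<forall>h\<in>carrier G. \<forall>w\<in>space M. act (g \<otimes>\<^bsub>G\<^esub> h) w = act g (act h w))"

definition free_action :: "('a, 'c) monoid_scheme \<Rightarrow> 'w measure \<Rightarrow> ('a \<Rightarrow> 'w \<Rightarrow> 'w) \<Rightarrow> bool" where
  "free_action G M act \<longleftrightarrow> (\<forall>g\<in>carrier G. \<forall>w\<in>space M. act g w = w \<longrightarrow> g = \<one>\<^bsub>G\<^esub>)"

definition fund_domain :: "('a, 'c) monoid_scheme \<Rightarrow> 'w measure \<Rightarrow> ('a \<Rightarrow> 'w \<Rightarrow> 'w) \<Rightarrow> 'w set \<Rightarrow> bool" where
  "fund_domain G M act X \<longleftrightarrow> X \<in> sets M \<and> emeasure M X < \<infinity> \<and>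
     (\<forall>w\<in>space M. \<exists>!g. g \<in> carrier G \<and> act g w \<in> X)"

definition me_coupling ::
  "('a, 'c) monoid_scheme \<Rightarrow> ('b, 'd) monoid_scheme \<Rightarrow> 'w measure \<Rightarrow>
   ('a \<Rightarrow> 'w \<Rightarrow> 'w) \<Rightarrow> ('b \<Rightarrow> 'w \<Rightarrow> 'w) \<Rightarrow> 'w set \<Rightarrow> 'w set \<Rightarrow> bool" where
  "me_coupling G L M aG aL XG XL \<longleftrightarrow>
     standard_borel M \<and> emeasure M (space M) \<noteq> 0 \<and>
     mp_action G M aG \<and> free_action G M aG \<and>
     mp_action L M aL \<and> free_action L M aL \<and>
     (\<forall>g\<in>carrier G. \<forall>l\<in>carrier L. \<forall>w\<in>space M. aG g (aL l w) = aL l (aG g w)) \<and>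
     fund_domain G M aG XG \<and> fund_domain L M aL XL"

definition cocycle ::
  "('b, 'd) monoid_scheme \<Rightarrow> ('b \<Rightarrow> 'w \<Rightarrow> 'w) \<Rightarrow> ('a \<Rightarrow> 'w \<Rightarrow> 'w) \<Rightarrow> 'w set \<Rightarrow> 'a \<Rightarrow> 'w \<Rightarrow> 'b" where
  "cocycle L aL aG XL g x = (THE l. l \<in> carrier L \<and> aL l (aG g x) \<in> XL)"

text \<open>L^p for 0 \<le> p (quasi-norm for p < 1); L^0 = measurable functions.\<close>
definition in_Lp :: "'w measure \<Rightarrow> real \<Rightarrow> ('w \<Rightarrow> real) \<Rightarrow> bool" where
  "in_Lp M p f \<longleftrightarrow> f \<in> borel_measurable M \<and>
     (p > 0 \<longrightarrow> (\<integral>\<^sup>+ x. ennreal (\<bar>f x\<bar> powr p) \<partial>M) < \<infinity>)"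

definition Lp_L0_coupling ::
  "('a, 'c) monoid_scheme \<Rightarrow> ('b, 'd) monoid_scheme \<Rightarrow> 'b set \<Rightarrow> real \<Rightarrow> 'w measure \<Rightarrow>
   ('a \<Rightarrow> 'w \<Rightarrow> 'w) \<Rightarrow> ('b \<Rightarrow> 'w \<Rightarrow> 'w) \<Rightarrow> 'w set \<Rightarrow> 'w set \<Rightarrow> bool" where
  "Lp_L0_coupling G L S p M aG aL XG XL \<longleftrightarrow>
     me_coupling G L M aG aL XG XL \<and>
     (\<forall>g\<in>carrier G. in_Lp (restrict_space M XL) p
        (\<lambda>x. real (word_len L S (cocycle L aL aG XL g x))))"

end

theory Submission
  imports Defs
begin

definition wprod :: "('a, 'c) monoid_scheme \<Rightarrow> 'a list \<Rightarrow> 'a" where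
  "wprod G ws = foldr (\<lambda>x y. x \<otimes>\<^bsub>G\<^esub> y) ws \<one>\<^bsub>G\<^esub>"

definition gens :: "('a, 'c) monoid_scheme \<Rightarrow> 'a set \<Rightarrow> 'a set" where
  "gens G S = S \<union> (\<lambda>s. inv\<^bsub>G\<^esub> s) ` S"

lemma word_len_alt: "word_len G S g = (LEAST n. \<exists>xs. length xs = n \<and> set xs \<subseteq> gens G S \<and> wprod G xs = g)"
  unfolding word_len_def gens_def wprod_def by simp

context group begin

lemma wprod_Nil[simp]: "wprod G [] = \<one>" by (simp add: wprod_def)
lemma wprod_Cons[simp]: "wprod G (x # xs) = x \<otimes> wprod G xs" by (simp add: wprod_def)

lemma wprod_carrier: "set ws \<subseteq> carrier G \<Longrightarrow> wprod G ws \<in> carrier G"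
  by (induction ws) auto

lemma wprod_append: "set ws \<subseteq> carrier G \<Longrightarrow> set vs \<subseteq> carrier G \<Longrightarrow>
  wprod G (ws @ vs) = wprod G ws \<otimes> wprod G vs"
  by (induction ws) (auto simp: m_assoc wprod_carrier)

lemma gens_carrier: "S \<subseteq> carrier G \<Longrightarrow> gens G S \<subseteq> carrier G"
  unfolding gens_def by auto

lemma gens_finite: "finite S \<Longrightarrow> finite (gens G S)"
  unfolding gens_def by auto

lemma gens_inv: "S \<subseteq> carrier G \<Longrightarrow> s \<in> gens G S \<Longrightarrow> inv s \<in> gens G S"
  unfolding gens_def by auto

lemma gen_word:
  assumes "S \<subseteq> carrier G" "g \<in> generate G S"
  shows "\<exists>ws. set ws \<subseteq> gens G S \<and> wprod G ws = g"
  using assms(2)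
proof (induction rule: generate.induct)
  case one
  then show ?case by (intro exI[of _ "[]"]) auto
next
  case (incl h)
  then show ?case using assms(1) by (intro exI[of _ "[h]"]) (auto simp: gens_def)
next
  case (inv h)
  then show ?case using assms(1) by (intro exI[of _ "[inv h]"]) (auto simp: gens_def)
next
  case (eng h1 h2)
  then obtain w1 w2 where "set w1 \<subseteq> gens G S" "wprod G w1 = h1" "set w2 \<subseteq> gens G S" "wprod G w2 = h2"
    by blast
  then show ?case using gens_carrier[OF assms(1)]
    by (intro exI[of _ "w1 @ w2"]) (auto simp: wprod_append)
qed

lemma word_len_word:
  assumes "fin_gen_set G S" "g \<in> carrier G"
  shows "\<exists>ws. length ws = word_len G S g \<and> set ws \<subseteq> gens G S \<and> wprod G ws = g"
proof -
  have "\<exists>ws. set ws \<subseteq> gens G S \<and> wprod G ws = g"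
    using assms gen_word unfolding fin_gen_set_def by blast
  then have "\<exists>n ws. length ws = n \<and> set ws \<subseteq> gens G S \<and> wprod G ws = g" by blast
  from LeastI_ex[OF this] show ?thesis unfolding word_len_alt by blast
qed

lemma word_len_le:
  assumes "set ws \<subseteq> gens G S"
  shows "word_len G S (wprod G ws) \<le> length ws"
  unfolding word_len_alt using assms by (intro Least_le) blast

lemma word_len_one: "word_len G S \<one> = 0"
  using word_len_le[of "[]" S] by simp

lemma word_len_gen: "s \<in> gens G S \<Longrightarrow> S \<subseteq> carrier G \<Longrightarrow> word_len G S s \<le> 1"
proof -
  assume a: "s \<in> gens G S" "S \<subseteq> carrier G"
  then have "s \<in> carrier G" using gens_carrier by auto
  then show ?thesis using word_len_le[of "[s]" S] a by simp
qed

lemma word_len_mult: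
  assumes "fin_gen_set G S" "g \<in> carrier G" "h \<in> carrier G"
  shows "word_len G S (g \<otimes> h) \<le> word_len G S g + word_len G S h"
proof -
  have Sc: "gens G S \<subseteq> carrier G" using assms(1) gens_carrier unfolding fin_gen_set_def by auto
  obtain w1 where w1: "length w1 = word_len G S g" "set w1 \<subseteq> gens G S" "wprod G w1 = g"
    using word_len_word assms by blast
  obtain w2 where w2: "length w2 = word_len G S h" "set w2 \<subseteq> gens G S" "wprod G w2 = h"
    using word_len_word assms by blast
  have "wprod G (w1 @ w2) = g \<otimes> h" using w1 w2 Sc by (simp add: wprod_append)
  moreover have "set (w1 @ w2) \<subseteq> gens G S" using w1 w2 by auto
  ultimately show ?thesis using word_len_le[of "w1 @ w2" S] w1 w2 by simp
qed

lemma ball_finite: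
  assumes "fin_gen_set G S"
  shows "finite {g \<in> carrier G. real (word_len G S g) \<le> r}"
proof -
  have fin: "finite (gens G S)" using assms gens_finite unfolding fin_gen_set_def by auto
  have "{g \<in> carrier G. real (word_len G S g) \<le> r} \<subseteq>
        wprod G ` {ws. set ws \<subseteq> gens G S \<and> length ws \<le> nat \<lfloor>r\<rfloor>}"
  proof
    fix g assume "g \<in> {g \<in> carrier G. real (word_len G S g) \<le> r}"
    then have g: "g \<in> carrier G" "real (word_len G S g) \<le> r" by auto
    obtain ws where "length ws = word_len G S g" "set ws \<subseteq> gens G S" "wprod G ws = g"
      using word_len_word assms g by blast
    moreover have "length ws \<le> nat \<lfloor>r\<rfloor>" using g(2) calculation(1)
      by (metis le_nat_floor of_nat_floor of_nat_le_iff floor_of_nat nat_int le_floor_iff)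
    ultimately show "g \<in> wprod G ` {ws. set ws \<subseteq> gens G S \<and> length ws \<le> nat \<lfloor>r\<rfloor>}" by blast
  qed
  moreover have "finite {ws. set ws \<subseteq> gens G S \<and> length ws \<le> nat \<lfloor>r\<rfloor>}"
    using finite_lists_length_le[OF fin] by blast
  ultimately show ?thesis using finite_subset by blast
qed

lemma word_len_compare:
  assumes "fin_gen_set G S" "fin_gen_set G S'"
  shows "\<exists>D::nat. D > 0 \<and> (\<forall>g\<in>carrier G. word_len G S' g \<le> D * word_len G S g)"
proof -
  define D where "D = Max (insert 1 (word_len G S' ` gens G S))"
  have fin: "finite (gens G S)" using assms gens_finite unfolding fin_gen_set_def by auto
  have Sc: "gens G S \<subseteq> carrier G" using assms(1) gens_carrier unfolding fin_gen_set_def by auto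
  have D1: "D > 0" unfolding D_def using fin by (metis Max_ge finite_imageI finite_insert insertI1 not_one_le_zero neq0_conv)
  have Ds: "word_len G S' s \<le> D" if "s \<in> gens G S" for s
    unfolding D_def using fin that by (intro Max_ge) auto
  have main: "word_len G S' (wprod G ws) \<le> D * length ws" if "set ws \<subseteq> gens G S" for ws
    using that
  proof (induction ws)
    case Nil then show ?case by (simp add: word_len_one)
  next
    case (Cons x ws)
    have "word_len G S' (wprod G (x # ws)) \<le> word_len G S' x + word_len G S' (wprod G ws)"
      unfolding wprod_Cons
    proof (rule word_len_mult[OF assms(2)])
      show "x \<in> carrier G" using Cons.prems Sc by auto
      show "wprod G ws \<in> carrier G" using Cons.prems Sc wprod_carrier by auto
    qed
    also have "\<dots> \<le> D + D * length ws" using Ds Cons by (intro add_mono) auto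
    finally show ?case by simp
  qed
  show ?thesis
  proof (intro exI[of _ D] conjI ballI D1)
    fix g assume "g \<in> carrier G"
    then obtain ws where "length ws = word_len G S g" "set ws \<subseteq> gens G S" "wprod G ws = g"
      using word_len_word assms by blast
    then show "word_len G S' g \<le> D * word_len G S g" using main by metis
  qed
qed

lemma carrier_countable:
  assumes "fin_gen_set G S"
  shows "countable (carrier G)"
proof -
  have "carrier G = (\<Union>n::nat. {g \<in> carrier G. real (word_len G S g) \<le> real n})"
    by (auto intro: exI[of _ "word_len G S _"])
  moreover have "countable (\<Union>n::nat. {g \<in> carrier G. real (word_len G S g) \<le> real n})"
  proof (intro countable_UN)
    fix n :: nat
    show "countable {g \<in> carrier G. real (word_len G S g) \<le> real n}"
      using ball_finite[OF assms, of "real n"] by (rule countable_finite)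
  qed auto
  ultimately show ?thesis by simp
qed

end

lemma emeasure_preimage_mp:
  assumes "f \<in> M \<rightarrow>\<^sub>M M" "distr M M f = M" "A \<in> sets M"
  shows "emeasure M (f -` A \<inter> space M) = emeasure M A"
proof -
  have "emeasure M (f -` A \<inter> space M) = emeasure (distr M M f) A"
    using emeasure_distr[OF assms(1) assms(3)] by simp
  then show ?thesis using assms(2) by simp
qed

locale cpl =
  fixes G :: "'a monoid" and L :: "'b monoid" and M :: "'w measure"
    and aG :: "'a \<Rightarrow> 'w \<Rightarrow> 'w" and aL :: "'b \<Rightarrow> 'w \<Rightarrow> 'w" and XG XL :: "'w set"
  assumes grpG: "group G" and grpL: "group L"
    and cp: "me_coupling G L M aG aL XG XL"
    and cG: "countable (carrier G)" and cL: "countable (carrier L)"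
begin

interpretation G: group G by (rule grpG)
interpretation L: group L by (rule grpL)

lemma mpG: "mp_action G M aG" and mpL: "mp_action L M aL"
  and fdG: "fund_domain G M aG XG" and fdL: "fund_domain L M aL XL"
  and frG: "free_action G M aG" and frL: "free_action L M aL"
  and comm: "\<And>g l w. g \<in> carrier G \<Longrightarrow> l \<in> carrier L \<Longrightarrow> w \<in> space M \<Longrightarrow> aG g (aL l w) = aL l (aG g w)"
  and nz: "emeasure M (space M) \<noteq> 0"
  using cp unfolding me_coupling_def by auto

lemma aG_meas: "g \<in> carrier G \<Longrightarrow> aG g \<in> M \<rightarrow>\<^sub>M M" using mpG unfolding mp_action_def by auto
lemma aL_meas: "l \<in> carrier L \<Longrightarrow> aL l \<in> M \<rightarrow>\<^sub>M M" using mpL unfolding mp_action_def by auto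
lemma aG_pres: "g \<in> carrier G \<Longrightarrow> distr M M (aG g) = M" using mpG unfolding mp_action_def by auto
lemma aL_pres: "l \<in> carrier L \<Longrightarrow> distr M M (aL l) = M" using mpL unfolding mp_action_def by auto
lemma aG_one: "w \<in> space M \<Longrightarrow> aG \<one>\<^bsub>G\<^esub> w = w" using mpG unfolding mp_action_def by auto
lemma aL_one: "w \<in> space M \<Longrightarrow> aL \<one>\<^bsub>L\<^esub> w = w" using mpL unfolding mp_action_def by auto
lemma aG_mult: "g \<in> carrier G \<Longrightarrow> h \<in> carrier G \<Longrightarrow> w \<in> space M \<Longrightarrow> aG (g \<otimes>\<^bsub>G\<^esub> h) w = aG g (aG h w)"
  using mpG unfolding mp_action_def by blast
lemma aL_mult: "g \<in> carrier L \<Longrightarrow> h \<in> carrier L \<Longrightarrow> w \<in> space M \<Longrightarrow> aL (g \<otimes>\<^bsub>L\<^esub> h) w = aL g (aL h w)"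
  using mpL unfolding mp_action_def by blast
lemma aG_space: "g \<in> carrier G \<Longrightarrow> w \<in> space M \<Longrightarrow> aG g w \<in> space M"
  by (rule measurable_space[OF aG_meas])
lemma aL_space: "l \<in> carrier L \<Longrightarrow> w \<in> space M \<Longrightarrow> aL l w \<in> space M"
  by (rule measurable_space[OF aL_meas])
lemma aG_inv: "g \<in> carrier G \<Longrightarrow> w \<in> space M \<Longrightarrow> aG (inv\<^bsub>G\<^esub> g) (aG g w) = w"
proof -
  assume a: "g \<in> carrier G" "w \<in> space M"
  have "aG (inv\<^bsub>G\<^esub> g \<otimes>\<^bsub>G\<^esub> g) w = aG (inv\<^bsub>G\<^esub> g) (aG g w)" using a by (intro aG_mult) auto
  then show ?thesis using a aG_one by simp
qed
lemma aL_inv: "l \<in> carrier L \<Longrightarrow> w \<in> space M \<Longrightarrow> aL (inv\<^bsub>L\<^esub> l) (aL l w) = w"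
proof -
  assume a: "l \<in> carrier L" "w \<in> space M"
  have "aL (inv\<^bsub>L\<^esub> l \<otimes>\<^bsub>L\<^esub> l) w = aL (inv\<^bsub>L\<^esub> l) (aL l w)" using a by (intro aL_mult) auto
  then show ?thesis using a aL_one by simp
qed

lemma XL_sets: "XL \<in> sets M" and XG_sets: "XG \<in> sets M" and XL_fin: "emeasure M XL < \<infinity>"
  using fdL fdG unfolding fund_domain_def by blast+
lemma XL_space: "XL \<subseteq> space M" using XL_sets sets.sets_into_space by auto
lemma XL_unique: "w \<in> space M \<Longrightarrow> \<exists>!l. l \<in> carrier L \<and> aL l w \<in> XL"
  using fdL unfolding fund_domain_def by blast
lemma XG_unique: "w \<in> space M \<Longrightarrow> \<exists>!g. g \<in> carrier G \<and> aG g w \<in> XG"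
  using fdG unfolding fund_domain_def by blast

lemma fmeas: "A \<in> sets M \<Longrightarrow> A \<subseteq> XL \<Longrightarrow> A \<in> fmeasurable M"
proof -
  assume a: "A \<in> sets M" "A \<subseteq> XL"
  then have "emeasure M A < \<infinity>" using XL_fin emeasure_mono[of A XL M] XL_sets by simp
  then show ?thesis using a by (simp add: fmeasurable_def)
qed

lemma comp_pres:
  assumes "g \<in> carrier G" "l \<in> carrier L" "A \<in> sets M"
  shows "emeasure M ((\<lambda>x. aL l (aG g x)) -` A \<inter> space M) = emeasure M A"
proof -
  have m: "(\<lambda>x. aL l (aG g x)) \<in> M \<rightarrow>\<^sub>M M"
    using aG_meas[OF assms(1)] aL_meas[OF assms(2)] by measurable
  have "distr M M (\<lambda>x. aL l (aG g x)) = distr (distr M M (aG g)) M (aL l)"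
    using distr_distr[OF aL_meas[OF assms(2)] aG_meas[OF assms(1)]] by (simp add: comp_def)
  also have "\<dots> = M" using aG_pres[OF assms(1)] aL_pres[OF assms(2)] by simp
  finally show ?thesis using emeasure_preimage_mp[OF m _ assms(3)] by simp
qed

lemma comp_sets:
  assumes "g \<in> carrier G" "l \<in> carrier L" "A \<in> sets M"
  shows "{x \<in> space M. aL l (aG g x) \<in> A} \<in> sets M"
proof -
  have m: "(\<lambda>x. aL l (aG g x)) \<in> M \<rightarrow>\<^sub>M M"
    using aG_meas[OF assms(1)] aL_meas[OF assms(2)] by measurable
  show ?thesis using measurable_sets[OF m assms(3)] by (simp add: vimage_def Int_def conj_commute)
qed

definition c :: "'a \<Rightarrow> 'w \<Rightarrow> 'b" where "c g x = cocycle L aL aG XL g x"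

lemma c_prop: assumes "g \<in> carrier G" "x \<in> space M"
  shows "c g x \<in> carrier L \<and> aL (c g x) (aG g x) \<in> XL"
  unfolding c_def cocycle_def using theI'[OF XL_unique[OF aG_space[OF assms]]] .

lemma c_eq: assumes "g \<in> carrier G" "x \<in> space M" "l \<in> carrier L" "aL l (aG g x) \<in> XL"
  shows "c g x = l"
  using c_prop[OF assms(1,2)] XL_unique[OF aG_space[OF assms(1,2)]] assms(3,4) by blast

definition T :: "'a \<Rightarrow> 'w \<Rightarrow> 'w" where "T g x = aL (c g x) (aG g x)"

lemma T_XL: "g \<in> carrier G \<Longrightarrow> x \<in> space M \<Longrightarrow> T g x \<in> XL"
  unfolding T_def using c_prop by auto

lemma c_mult:
  assumes "g \<in> carrier G" "h \<in> carrier G" "x \<in> space M"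
  shows "c (g \<otimes>\<^bsub>G\<^esub> h) x = c g (T h x) \<otimes>\<^bsub>L\<^esub> c h x"
proof -
  define l2 where "l2 = c h x"
  define y where "y = T h x"
  have l2: "l2 \<in> carrier L" using c_prop[OF assms(2,3)] l2_def by simp
  have y: "y \<in> space M" using T_XL[OF assms(2,3)] XL_space y_def by auto
  define l1 where "l1 = c g y"
  have l1: "l1 \<in> carrier L" "aL l1 (aG g y) \<in> XL" using c_prop[OF assms(1) y] l1_def by auto
  have hx: "aG h x \<in> space M" using aG_space assms by auto
  have "aG g y = aL l2 (aG (g \<otimes>\<^bsub>G\<^esub> h) x)"
    unfolding y_def T_def l2_def[symmetric]
    using comm[OF assms(1) l2 hx] aG_mult[OF assms] by simp
  then have "aL (l1 \<otimes>\<^bsub>L\<^esub> l2) (aG (g \<otimes>\<^bsub>G\<^esub> h) x) \<in> XL"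
    using l1 l2 aL_mult aG_space assms by simp
  then have "c (g \<otimes>\<^bsub>G\<^esub> h) x = l1 \<otimes>\<^bsub>L\<^esub> l2"
    using c_eq[of "g \<otimes>\<^bsub>G\<^esub> h" x "l1 \<otimes>\<^bsub>L\<^esub> l2"] l1 l2 assms by simp
  then show ?thesis unfolding l1_def l2_def y_def .
qed

lemma sets_c:
  assumes "g \<in> carrier G"
  shows "{x \<in> XL. P (c g x)} \<in> sets M"
proof -
  have "{x \<in> XL. P (c g x)} = (\<Union>l\<in>{l \<in> carrier L. P l}. {x \<in> space M. aL l (aG g x) \<in> XL} \<inter> XL)"
  proof safe
    fix x assume "x \<in> XL" "P (c g x)"
    then show "x \<in> (\<Union>l\<in>{l \<in> carrier L. P l}. {x \<in> space M. aL l (aG g x) \<in> XL} \<inter> XL)"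
      using c_prop[OF assms, of x] XL_space by (intro UN_I[of "c g x"]) auto
  next
    fix x l assume "x \<in> XL" "l \<in> carrier L" "P l" "aL l (aG g x) \<in> XL"
    then show "P (c g x)" using c_eq[OF assms, of x l] XL_space by auto
  qed
  also have "\<dots> \<in> sets M"
    using cL comp_sets[OF assms _ XL_sets] XL_sets
    by (intro sets.countable_UN') (auto intro: countable_subset[OF _ cL])
  finally show ?thesis .
qed

end

context cpl begin

interpretation G: group G by (rule grpG)
interpretation L: group L by (rule grpL)

lemma meas_GL: "g \<in> carrier G \<Longrightarrow> l \<in> carrier L \<Longrightarrow> (\<lambda>y. aG g (aL l y)) \<in> M \<rightarrow>\<^sub>M M"
  using aG_meas aL_meas by measurable

lemma meas_LG: "g \<in> carrier G \<Longrightarrow> l \<in> carrier L \<Longrightarrow> (\<lambda>y. aL l (aG g y)) \<in> M \<rightarrow>\<^sub>M M"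
  using aG_meas aL_meas by measurable

lemma sets_pre:
  assumes a: "f \<in> M \<rightarrow>\<^sub>M M" "A \<in> sets M" "B \<in> sets M"
  shows "{x \<in> A. f x \<in> B} \<in> sets M"
proof -
  have "{x \<in> A. f x \<in> B} = A \<inter> (f -` B \<inter> space M)" using sets.sets_into_space[OF a(2)] by auto
  then show ?thesis using measurable_sets[OF a(1) a(3)] a(2) by simp
qed

lemma T_pre:
  assumes g: "g \<in> carrier G" and B: "B \<in> sets M" "B \<subseteq> XL"
  shows "{x \<in> XL. T g x \<in> B} \<in> sets M \<and> emeasure M {x \<in> XL. T g x \<in> B} = emeasure M B"
proof -
  define P where "P l = {x \<in> XL. aL l (aG g x) \<in> B}" for l
  define Q where "Q l = {y \<in> B. aG (inv\<^bsub>G\<^esub> g) (aL (inv\<^bsub>L\<^esub> l) y) \<in> XL}" for l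
  have Bs: "B \<subseteq> space M" using B XL_space by auto
  have Psets: "P l \<in> sets M" if "l \<in> carrier L" for l
    unfolding P_def using sets_pre[OF meas_LG[OF g that] XL_sets B(1)] .
  have Qsets: "Q l \<in> sets M" if "l \<in> carrier L" for l
    unfolding Q_def using sets_pre[OF meas_GL[OF _ L.inv_closed[OF that]] B(1) XL_sets] g by simp
  have PQ: "P l = (\<lambda>x. aL l (aG g x)) -` Q l \<inter> space M" if l: "l \<in> carrier L" for l
  proof (rule equalityI; rule subsetI)
    fix x assume x: "x \<in> P l"
    then have xs: "x \<in> space M" unfolding P_def using XL_space by auto
    have "aL (inv\<^bsub>L\<^esub> l) (aL l (aG g x)) = aG g x" using aL_inv[OF l aG_space[OF g xs]] .
    then have "aL l (aG g x) \<in> Q l" using x xs aG_inv[OF g xs] unfolding P_def Q_def by simp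
    then show "x \<in> (\<lambda>x. aL l (aG g x)) -` Q l \<inter> space M" using xs by simp
  next
    fix x assume "x \<in> (\<lambda>x. aL l (aG g x)) -` Q l \<inter> space M"
    then have x: "x \<in> space M" "aL l (aG g x) \<in> Q l" by auto
    have "aL (inv\<^bsub>L\<^esub> l) (aL l (aG g x)) = aG g x" using aL_inv[OF l aG_space[OF g x(1)]] .
    then show "x \<in> P l" using x aG_inv[OF g x(1)] unfolding P_def Q_def by simp
  qed
  have Pm: "emeasure M (P l) = emeasure M (Q l)" if l: "l \<in> carrier L" for l
    using PQ[OF l] comp_pres[OF g l Qsets[OF l]] by simp
  have U1: "{x \<in> XL. T g x \<in> B} = (\<Union>l\<in>carrier L. P l)"
  proof safe
    fix x assume x: "x \<in> XL" "T g x \<in> B"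
    then have "c g x \<in> carrier L" using c_prop[OF g] XL_space by auto
    then show "x \<in> (\<Union>l\<in>carrier L. P l)" using x unfolding P_def T_def by auto
  next
    fix x l assume l: "l \<in> carrier L" and x: "x \<in> P l"
    then have x2: "x \<in> XL" "aL l (aG g x) \<in> B" unfolding P_def by auto
    then have "c g x = l" using c_eq[OF g _ l] XL_space B by auto
    then show "x \<in> XL" "T g x \<in> B" using x2 unfolding T_def by auto
  qed
  have D1: "disjoint_family_on P (carrier L)"
    unfolding disjoint_family_on_def
  proof (intro ballI impI)
    fix l l' assume l: "l \<in> carrier L" "l' \<in> carrier L" "l \<noteq> l'"
    show "P l \<inter> P l' = {}"
    proof (rule ccontr)
      assume "P l \<inter> P l' \<noteq> {}"
      then obtain x where x: "x \<in> XL" "aL l (aG g x) \<in> B" "aL l' (aG g x) \<in> B" unfolding P_def by auto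
      then have "c g x = l" "c g x = l'" using c_eq[OF g] l XL_space B by auto
      then show False using l by simp
    qed
  qed
  have U2: "B = (\<Union>l\<in>carrier L. Q l)"
  proof safe
    fix y assume y: "y \<in> B"
    then have ys: "y \<in> space M" using Bs by auto
    define u where "u = aG (inv\<^bsub>G\<^esub> g) y"
    have us: "u \<in> space M" unfolding u_def using aG_space[OF _ ys] g by simp
    obtain l' where l': "l' \<in> carrier L" "aL l' u \<in> XL" using XL_unique[OF us] by blast
    have "aL (inv\<^bsub>L\<^esub> (inv\<^bsub>L\<^esub> l')) y = aL l' y" using l' by simp
    moreover have "aG (inv\<^bsub>G\<^esub> g) (aL l' y) = aL l' u" unfolding u_def using comm[OF _ l'(1) ys] g by simp
    ultimately have "y \<in> Q (inv\<^bsub>L\<^esub> l')" unfolding Q_def using y l' by simp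
    then show "y \<in> (\<Union>l\<in>carrier L. Q l)" using l' by auto
  next
    fix y l assume "y \<in> Q l" then show "y \<in> B" unfolding Q_def by auto
  qed
  have D2: "disjoint_family_on Q (carrier L)"
    unfolding disjoint_family_on_def
  proof (intro ballI impI)
    fix l l' assume l: "l \<in> carrier L" "l' \<in> carrier L" "l \<noteq> l'"
    show "Q l \<inter> Q l' = {}"
    proof (rule ccontr)
      assume "Q l \<inter> Q l' \<noteq> {}"
      then obtain y where y: "y \<in> B" "aG (inv\<^bsub>G\<^esub> g) (aL (inv\<^bsub>L\<^esub> l) y) \<in> XL"
          "aG (inv\<^bsub>G\<^esub> g) (aL (inv\<^bsub>L\<^esub> l') y) \<in> XL" unfolding Q_def by auto
      have ys: "y \<in> space M" using y Bs by auto
      define u where "u = aG (inv\<^bsub>G\<^esub> g) y"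
      have us: "u \<in> space M" unfolding u_def using aG_space[OF _ ys] g by simp
      have "aL (inv\<^bsub>L\<^esub> l) u \<in> XL" "aL (inv\<^bsub>L\<^esub> l') u \<in> XL"
        using y comm[OF _ _ ys] g l unfolding u_def by auto
      then have "inv\<^bsub>L\<^esub> l = inv\<^bsub>L\<^esub> l'" using XL_unique[OF us] l by auto
      then have "l = l'" using l by (metis L.inv_inv)
      then show False using l by simp
    qed
  qed
  have "{x \<in> XL. T g x \<in> B} \<in> sets M"
    unfolding U1 using cL Psets by (intro sets.countable_UN') auto
  moreover have "emeasure M {x \<in> XL. T g x \<in> B} = emeasure M B"
  proof -
    have "emeasure M {x \<in> XL. T g x \<in> B} = (\<integral>\<^sup>+ l. emeasure M (P l) \<partial>count_space (carrier L))"
      unfolding U1 using cL Psets D1 by (intro emeasure_UN_countable) auto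
    also have "\<dots> = (\<integral>\<^sup>+ l. emeasure M (Q l) \<partial>count_space (carrier L))"
      using Pm by (intro nn_integral_cong) auto
    also have "\<dots> = emeasure M (\<Union>l\<in>carrier L. Q l)"
      using cL Qsets D2 by (intro emeasure_UN_countable[symmetric]) auto
    finally show ?thesis using U2 by simp
  qed
  ultimately show ?thesis by blast
qed

lemma XL_pos: "emeasure M XL > 0"
proof (rule ccontr)
  assume "\<not> emeasure M XL > 0"
  then have z: "emeasure M XL = 0" by simp
  have "space M = (\<Union>l\<in>carrier L. aL l -` XL \<inter> space M)"
  proof (rule equalityI; rule subsetI)
    fix x assume x: "x \<in> space M"
    obtain l where "l \<in> carrier L" "aL l x \<in> XL" using XL_unique[OF x] by auto
    then show "x \<in> (\<Union>l\<in>carrier L. aL l -` XL \<inter> space M)" using x by auto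
  qed auto
  moreover have "(\<Union>l\<in>carrier L. aL l -` XL \<inter> space M) \<in> null_sets M"
  proof (intro null_sets_UN' cL)
    fix l assume l: "l \<in> carrier L"
    have "emeasure M (aL l -` XL \<inter> space M) = 0"
      using emeasure_preimage_mp[OF aL_meas[OF l] aL_pres[OF l] XL_sets] z by simp
    then show "aL l -` XL \<inter> space M \<in> null_sets M"
      using measurable_sets[OF aL_meas[OF l] XL_sets] by (simp add: null_sets_def)
  qed
  ultimately have "emeasure M (space M) = 0" by (simp add: null_sets_def)
  then show False using nz by simp
qed

definition G0 :: "'a \<Rightarrow> 'w set" where "G0 d = {x \<in> XL. aG d x \<in> XG}"

lemma G0_sets: "d \<in> carrier G \<Longrightarrow> G0 d \<in> sets M"
  unfolding G0_def by (rule sets_pre[OF aG_meas XL_sets XG_sets])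

lemma G0_exists: "\<exists>d\<in>carrier G. emeasure M (G0 d) > 0"
proof (rule ccontr)
  assume "\<not> (\<exists>d\<in>carrier G. emeasure M (G0 d) > 0)"
  then have z: "\<And>d. d \<in> carrier G \<Longrightarrow> emeasure M (G0 d) = 0" by simp
  have "XL = (\<Union>d\<in>carrier G. G0 d)"
  proof (rule equalityI; rule subsetI)
    fix x assume x: "x \<in> XL"
    then have "x \<in> space M" using XL_space by auto
    then obtain d where "d \<in> carrier G" "aG d x \<in> XG" using XG_unique by blast
    then show "x \<in> (\<Union>d\<in>carrier G. G0 d)" using x unfolding G0_def by auto
  qed (auto simp: G0_def)
  moreover have "(\<Union>d\<in>carrier G. G0 d) \<in> null_sets M"
    using z G0_sets cG by (intro null_sets_UN') (auto simp: null_sets_def)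
  ultimately have "emeasure M XL = 0" by (simp add: null_sets_def)
  then show False using XL_pos by simp
qed

end

context cpl begin

interpretation G: group G by (rule grpG)
interpretation L: group L by (rule grpL)

lemma G0_sub: "G0 d \<subseteq> XL" unfolding G0_def by auto

lemma fiber_sum:
  assumes d: "d \<in> carrier G" and F: "finite F" "F \<subseteq> carrier G" and l: "l \<in> carrier L"
  shows "(\<Sum>g\<in>F. measure M {x \<in> G0 d. aL l (aG g x) \<in> XL}) \<le> measure M XL"
proof -
  define Y where "Y g = {y \<in> XL. aG (inv\<^bsub>G\<^esub> g) (aL (inv\<^bsub>L\<^esub> l) y) \<in> G0 d}" for g
  have Ysets: "Y g \<in> sets M" if g: "g \<in> carrier G" for g
    unfolding Y_def by (rule sets_pre[OF meas_GL[OF G.inv_closed[OF g] L.inv_closed[OF l]] XL_sets G0_sets[OF d]])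
  have PY: "{x \<in> G0 d. aL l (aG g x) \<in> XL} = (\<lambda>x. aL l (aG g x)) -` Y g \<inter> space M"
    if g: "g \<in> carrier G" for g
  proof (rule equalityI; rule subsetI)
    fix x assume x: "x \<in> {x \<in> G0 d. aL l (aG g x) \<in> XL}"
    then have xs: "x \<in> space M" using G0_sub XL_space by auto
    have "aL (inv\<^bsub>L\<^esub> l) (aL l (aG g x)) = aG g x" using aL_inv[OF l aG_space[OF g xs]] .
    then have "aL l (aG g x) \<in> Y g" using x xs aG_inv[OF g xs] unfolding Y_def by simp
    then show "x \<in> (\<lambda>x. aL l (aG g x)) -` Y g \<inter> space M" using xs by simp
  next
    fix x assume "x \<in> (\<lambda>x. aL l (aG g x)) -` Y g \<inter> space M"
    then have x: "x \<in> space M" "aL l (aG g x) \<in> Y g" by auto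
    have "aL (inv\<^bsub>L\<^esub> l) (aL l (aG g x)) = aG g x" using aL_inv[OF l aG_space[OF g x(1)]] .
    then show "x \<in> {x \<in> G0 d. aL l (aG g x) \<in> XL}" using x aG_inv[OF g x(1)] unfolding Y_def by simp
  qed
  have Pm: "measure M {x \<in> G0 d. aL l (aG g x) \<in> XL} = measure M (Y g)" if g: "g \<in> carrier G" for g
    using PY[OF g] comp_pres[OF g l Ysets[OF g]] by (simp add: measure_def)
  have D: "disjoint_family_on Y F"
    unfolding disjoint_family_on_def
  proof (intro ballI impI)
    fix g g' assume gg: "g \<in> F" "g' \<in> F" "g \<noteq> g'"
    then have g: "g \<in> carrier G" "g' \<in> carrier G" using F by auto
    show "Y g \<inter> Y g' = {}"
    proof (rule ccontr)
      assume "Y g \<inter> Y g' \<noteq> {}"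
      then obtain y where y: "y \<in> XL" "aG (inv\<^bsub>G\<^esub> g) (aL (inv\<^bsub>L\<^esub> l) y) \<in> G0 d"
          "aG (inv\<^bsub>G\<^esub> g') (aL (inv\<^bsub>L\<^esub> l) y) \<in> G0 d" unfolding Y_def by auto
      define u where "u = aL (inv\<^bsub>L\<^esub> l) y"
      have us: "u \<in> space M" unfolding u_def using aL_space[OF L.inv_closed[OF l]] y XL_space by auto
      have "aG (d \<otimes>\<^bsub>G\<^esub> inv\<^bsub>G\<^esub> g) u \<in> XG" "aG (d \<otimes>\<^bsub>G\<^esub> inv\<^bsub>G\<^esub> g') u \<in> XG"
        using y aG_mult[OF d G.inv_closed us] g unfolding u_def[symmetric] G0_def by auto
      moreover have "d \<otimes>\<^bsub>G\<^esub> inv\<^bsub>G\<^esub> g \<in> carrier G" "d \<otimes>\<^bsub>G\<^esub> inv\<^bsub>G\<^esub> g' \<in> carrier G" using d g by auto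
      ultimately have "d \<otimes>\<^bsub>G\<^esub> inv\<^bsub>G\<^esub> g = d \<otimes>\<^bsub>G\<^esub> inv\<^bsub>G\<^esub> g'" using XG_unique[OF us] by blast
      then have "inv\<^bsub>G\<^esub> g = inv\<^bsub>G\<^esub> g'" using d g by (simp add: G.Units_eq)
      then have "g = g'" using g by (metis G.inv_inv)
      then show False using gg by simp
    qed
  qed
  have "(\<Sum>g\<in>F. measure M {x \<in> G0 d. aL l (aG g x) \<in> XL}) = (\<Sum>g\<in>F. measure M (Y g))"
    using Pm F by (intro sum.cong) auto
  also have "\<dots> = measure M (\<Union>g\<in>F. Y g)"
  proof (rule measure_finite_Union[symmetric, OF F(1) _ D])
    show "Y ` F \<subseteq> sets M" using Ysets F by auto
    fix g assume "g \<in> F"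
    then have "g \<in> carrier G" using F by auto
    then have "Y g \<in> fmeasurable M" using fmeas[OF Ysets] unfolding Y_def by auto
    then show "emeasure M (Y g) \<noteq> \<infinity>" by (simp add: fmeasurable_def less_top)
  qed
  also have "\<dots> \<le> measure M XL"
  proof (rule measure_mono_fmeasurable)
    show "(\<Union>g\<in>F. Y g) \<subseteq> XL" unfolding Y_def by auto
    show "(\<Union>g\<in>F. Y g) \<in> sets M" using Ysets F by (intro sets.finite_UN) auto
    show "XL \<in> fmeasurable M" using fmeas[OF XL_sets] by simp
  qed
  finally show ?thesis .
qed

lemma sets_G0c: "d \<in> carrier G \<Longrightarrow> g \<in> carrier G \<Longrightarrow> {x \<in> G0 d. P (c g x)} \<in> sets M"
proof -
  assume a: "d \<in> carrier G" "g \<in> carrier G"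
  have "{x \<in> G0 d. P (c g x)} = G0 d \<inter> {x \<in> XL. P (c g x)}" using G0_sub by auto
  then show ?thesis using sets_c[OF a(2)] G0_sets[OF a(1)] by simp
qed

lemma fiber_main:
  assumes d: "d \<in> carrier G" and F: "finite F" "F \<subseteq> carrier G" and E: "finite E" "E \<subseteq> carrier L"
    and hyp: "\<And>g. g \<in> F \<Longrightarrow> measure M {x \<in> G0 d. c g x \<notin> E} \<le> measure M (G0 d) / 2"
  shows "real (card F) * (measure M (G0 d) / 2) \<le> real (card E) * measure M XL"
proof -
  define P where "P g l = {x \<in> G0 d. aL l (aG g x) \<in> XL}" for g l
  have Psets: "P g l \<in> sets M" if "g \<in> carrier G" "l \<in> carrier L" for g l
    unfolding P_def by (rule sets_pre[OF meas_LG[OF that] G0_sets[OF d] XL_sets])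
  have step: "measure M (G0 d) / 2 \<le> (\<Sum>l\<in>E. measure M (P g l))" if g: "g \<in> F" for g
  proof -
    have gc: "g \<in> carrier G" using g F by auto
    define A where "A = {x \<in> G0 d. c g x \<in> E}"
    define B where "B = {x \<in> G0 d. c g x \<notin> E}"
    have As: "A \<in> sets M" unfolding A_def by (rule sets_G0c[OF d gc])
    have Bs: "B \<in> sets M" unfolding B_def by (rule sets_G0c[OF d gc])
    have "G0 d = A \<union> B" unfolding A_def B_def by auto
    then have "measure M (G0 d) \<le> measure M A + measure M B" using measure_Un_le[OF As Bs] by simp
    then have 1: "measure M (G0 d) / 2 \<le> measure M A" using hyp[OF g] unfolding B_def by simp
    have "A \<subseteq> (\<Union>l\<in>E. P g l)"
    proof
      fix x assume x: "x \<in> A"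
      then have xs: "x \<in> space M" unfolding A_def using G0_sub XL_space by auto
      have "aL (c g x) (aG g x) \<in> XL" using c_prop[OF gc xs] by simp
      then show "x \<in> (\<Union>l\<in>E. P g l)" using x unfolding A_def P_def by auto
    qed
    then have "measure M A \<le> measure M (\<Union>l\<in>E. P g l)"
    proof (rule measure_mono_fmeasurable[OF _ As])
      show "(\<Union>l\<in>E. P g l) \<in> fmeasurable M"
        using Psets[OF gc] E by (intro fmeas sets.finite_UN) (auto simp: P_def G0_def)
    qed
    also have "\<dots> \<le> (\<Sum>l\<in>E. measure M (P g l))"
      using Psets[OF gc] E by (intro measure_UNION_le) auto
    finally show ?thesis using 1 by simp
  qed
  have "real (card F) * (measure M (G0 d) / 2) = (\<Sum>g\<in>F. measure M (G0 d) / 2)" by simp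
  also have "\<dots> \<le> (\<Sum>g\<in>F. \<Sum>l\<in>E. measure M (P g l))" using step by (intro sum_mono) auto
  also have "\<dots> = (\<Sum>l\<in>E. \<Sum>g\<in>F. measure M (P g l))" by (rule sum.swap)
  also have "\<dots> \<le> (\<Sum>l\<in>E. measure M XL)"
    unfolding P_def using fiber_sum[OF d F] E by (intro sum_mono) auto
  also have "\<dots> = real (card E) * measure M XL" by simp
  finally show ?thesis .
qed

end

lemma sum_ind_min: "(\<Sum>k<N. (if k < a then 1 else 0 :: ennreal)) = of_nat (min a N)"
proof (induction N)
  case 0 then show ?case by simp
next
  case (Suc N)
  show ?case
  proof (cases "N < a")
    case True
    then show ?thesis using Suc by (cases "a = Suc N") (auto simp: min_def)
  next
    case False
    then show ?thesis using Suc by (auto simp: min_def)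
  qed
qed

lemma ptwise_min:
  fixes a N L :: nat and p :: real
  assumes p: "0 < p" "p < 1"
  shows "real (min a N) \<le> real L + real N powr (1 - p) * (if L < a then real a powr p else 0)"
proof (cases "L < a")
  case False
  then show ?thesis by auto
next
  case True
  then have a1: "real a > 0" by auto
  have "real (min a N) \<le> real N powr (1 - p) * real a powr p"
  proof (cases "a \<le> N")
    case True
    have "real a = real a powr p * real a powr (1 - p)" using a1 by (simp add: powr_add[symmetric])
    also have "\<dots> \<le> real a powr p * real N powr (1 - p)"
      using True p by (intro mult_left_mono powr_mono2) auto
    finally show ?thesis using True by (simp add: mult.commute)
  next
    case False
    show ?thesis
    proof (cases "N = 0")
      case True then show ?thesis by simp
    next
      case N0: False
      have "real N = real N powr p * real N powr (1 - p)" using N0 by (simp add: powr_add[symmetric])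
      also have "\<dots> \<le> real a powr p * real N powr (1 - p)"
        using False p by (intro mult_right_mono powr_mono2) auto
      finally show ?thesis using False by (simp add: mult.commute)
    qed
  qed
  then show ?thesis using True by simp
qed

context finite_measure begin

lemma tail_lemma:
  fixes f :: "'a \<Rightarrow> nat"
  assumes fm: "(\<lambda>x. real (f x)) \<in> borel_measurable M"
    and p: "0 < p" "p < 1"
    and int: "(\<integral>\<^sup>+ x. ennreal (real (f x) powr p) \<partial>M) < \<infinity>"
    and dl: "\<delta> > 0" and et: "\<eta> > 0"
  shows "\<forall>\<^sub>F n in sequentially. \<forall>N::nat. \<delta> * real n powr (1/p) \<le> real N \<longrightarrow>
     real n * (measure M {x\<in>space M. N < f x} + (\<Sum>k<N. measure M {x\<in>space M. k < f x}) / real N) \<le> \<eta>"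
proof -
  define S where "S k = {x\<in>space M. k < f x}" for k :: nat
  have Ssets: "S k \<in> sets M" for k
  proof -
    have "S k = {x\<in>space M. real k < real (f x)}" unfolding S_def by auto
    also have "\<dots> \<in> sets M" using fm by measurable
    finally show ?thesis .
  qed
  define \<phi> where "\<phi> L x = ennreal (real (f x) powr p) * indicator (S L) x" for L :: nat and x
  define J where "J L = integral\<^sup>N M (\<phi> L)" for L
  have fpm: "(\<lambda>x. ennreal (real (f x) powr p)) \<in> borel_measurable M" using fm by measurable
  have phim: "\<phi> L \<in> borel_measurable M" for L
    unfolding \<phi>_def using fpm Ssets by measurable
  have Jfin: "J L < \<infinity>" for L
  proof -
    have "J L \<le> (\<integral>\<^sup>+ x. ennreal (real (f x) powr p) \<partial>M)"
      unfolding J_def \<phi>_def by (intro nn_integral_mono) (auto split: split_indicator)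
    then show ?thesis using int by (simp add: le_less_trans)
  qed
  define eps where "eps = \<eta> * \<delta> powr p / 4"
  have eps: "eps > 0" unfolding eps_def using et dl by simp
  have "(\<integral>\<^sup>+ x. (\<Sqinter>L. \<phi> L x) \<partial>M) = (\<Sqinter>L. integral\<^sup>N M (\<phi> L))"
  proof (rule nn_integral_monotone_convergence_INF_decseq)
    show "antimono_on UNIV \<phi>"
      unfolding monotone_on_def le_fun_def \<phi>_def S_def
      by (auto split: split_indicator)
    show "\<phi> i \<in> borel_measurable M" for i by (rule phim)
    show "integral\<^sup>N M (\<phi> 0) < \<infinity>" using Jfin unfolding J_def by simp
  qed
  moreover have "(\<Sqinter>L. \<phi> L x) = 0" for x
  proof -
    have "(\<Sqinter>L. \<phi> L x) \<le> \<phi> (f x) x" by (rule INF_lower) simp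
    also have "\<phi> (f x) x = 0" unfolding \<phi>_def S_def by (simp split: split_indicator)
    finally show ?thesis by simp
  qed
  ultimately have "(\<Sqinter>L. J L) = 0" unfolding J_def by simp
  then have "(\<Sqinter>L. J L) < ennreal eps" using eps by simp
  then obtain L where L: "J L < ennreal eps" by (auto simp: INF_less_iff)
  define jr where "jr = enn2real (J L)"
  have Jjr: "J L = ennreal jr" unfolding jr_def using Jfin[of L] by (simp add: less_top)
  have jr0: "jr \<ge> 0" unfolding jr_def by simp
  have jre: "jr \<le> eps" using L Jjr eps jr0 by (simp add: ennreal_less_iff)
  have bi: "real N powr p * measure M (S N) \<le> jr" if NL: "L \<le> N" for N
  proof -
    have "ennreal (real N powr p) * emeasure M (S N) = (\<integral>\<^sup>+ x. ennreal (real N powr p) * indicator (S N) x \<partial>M)"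
      using Ssets by (simp add: nn_integral_cmult_indicator)
    also have "\<dots> \<le> J L"
      unfolding J_def \<phi>_def
    proof (intro nn_integral_mono)
      fix x assume "x \<in> space M"
      show "ennreal (real N powr p) * indicator (S N) x \<le> ennreal (real (f x) powr p) * indicator (S L) x"
      proof (cases "x \<in> S N")
        case True
        then have "N < f x" "L < f x" using NL unfolding S_def by auto
        then have "real N powr p \<le> real (f x) powr p" using p by (intro powr_mono2) auto
        then show ?thesis using True \<open>L < f x\<close> \<open>x \<in> space M\<close> unfolding S_def by (auto simp: indicator_def)
      qed simp
    qed
    finally have "ennreal (real N powr p * measure M (S N)) \<le> ennreal jr"
      using Jjr by (simp add: emeasure_eq_measure ennreal_mult'')
    then show ?thesis using jr0 by (simp add: ennreal_le_iff)
  qed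
  have bii: "(\<Sum>k<N. measure M (S k)) \<le> real L * measure M (space M) + real N powr (1 - p) * jr" for N
  proof -
    have "ennreal (\<Sum>k<N. measure M (S k)) = (\<Sum>k<N. emeasure M (S k))"
      by (simp add: emeasure_eq_measure sum_ennreal)
    also have "\<dots> = (\<integral>\<^sup>+ x. (\<Sum>k<N. indicator (S k) x) \<partial>M)"
      using Ssets by (simp add: nn_integral_sum)
    also have "\<dots> \<le> (\<integral>\<^sup>+ x. ennreal (real L) + ennreal (real N powr (1 - p)) * \<phi> L x \<partial>M)"
    proof (intro nn_integral_mono)
      fix x assume x: "x \<in> space M"
      have "(\<Sum>k<N. indicator (S k) x :: ennreal) = (\<Sum>k<N. (if k < f x then 1 else 0 :: ennreal))"
        using x unfolding S_def by (intro sum.cong) (auto simp: indicator_def)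
      also have "\<dots> = ennreal (real (min (f x) N))" by (simp add: sum_ind_min ennreal_of_nat_eq_real_of_nat)
      also have "\<dots> \<le> ennreal (real L + real N powr (1 - p) * (if L < f x then real (f x) powr p else 0))"
        by (intro ennreal_leI ptwise_min[OF p])
      also have "\<dots> = ennreal (real L) + ennreal (real N powr (1 - p)) * \<phi> L x"
        using x unfolding \<phi>_def S_def
        by (auto simp: indicator_def ennreal_plus[symmetric] ennreal_mult''[symmetric] simp del: ennreal_plus)
      finally show "(\<Sum>k<N. indicator (S k) x :: ennreal) \<le> ennreal (real L) + ennreal (real N powr (1 - p)) * \<phi> L x" .
    qed
    also have "\<dots> = ennreal (real L) * emeasure M (space M) + ennreal (real N powr (1 - p)) * J L"
      unfolding J_def using phim
      by (simp add: nn_integral_add nn_integral_cmult nn_integral_const)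
    also have "\<dots> = ennreal (real L * measure M (space M) + real N powr (1 - p) * jr)"
      using Jjr jr0 by (simp add: emeasure_eq_measure ennreal_plus ennreal_mult)
    finally have "ennreal (\<Sum>k<N. measure M (S k)) \<le> ennreal (real L * measure M (space M) + real N powr (1 - p) * jr)" .
    moreover have "0 \<le> real L * measure M (space M) + real N powr (1 - p) * jr" using jr0 by simp
    ultimately show ?thesis by (metis ennreal_le_iff)
  qed
  define mu where "mu = measure M (space M)"
  have mu0: "mu \<ge> 0" unfolding mu_def by simp
  have "((\<lambda>n. real n powr (1 - 1/p)) \<longlongrightarrow> 0) sequentially"
    using p by (intro tendsto_neg_powr filterlim_real_sequentially) (simp add: field_simps)
  then have "((\<lambda>n. real L * mu / \<delta> * real n powr (1 - 1/p)) \<longlongrightarrow> real L * mu / \<delta> * 0) sequentially"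
    by (intro tendsto_mult tendsto_const)
  then have E3: "\<forall>\<^sub>F n in sequentially. real L * mu / \<delta> * real n powr (1 - 1/p) < \<eta> / 2"
    using et by (intro order_tendstoD(2)) auto
  have E2: "\<forall>\<^sub>F n in sequentially. real n \<ge> 1 \<and> real n \<ge> real L / \<delta>"
  proof -
    have "\<forall>\<^sub>F n in sequentially. n \<ge> Suc 0 \<and> n \<ge> nat \<lceil>real L / \<delta>\<rceil>"
      by (intro eventually_conj eventually_ge_at_top)
    then show ?thesis
      by eventually_elim (auto simp: nat_ceiling_le_eq)
  qed
  show ?thesis
    using E2 E3
  proof eventually_elim
    case (elim n)
    show ?case
    proof (intro allI impI)
      fix N :: nat assume N: "\<delta> * real n powr (1/p) \<le> real N"
      have n1: "real n \<ge> 1" using elim by simp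
      have "real n powr 1 \<le> real n powr (1/p)" using n1 p by (intro powr_mono) auto
      then have nn: "real n \<le> real n powr (1/p)" using n1 by simp
      have "real L \<le> \<delta> * real n" using elim dl by (simp add: field_simps)
      also have "\<dots> \<le> \<delta> * real n powr (1/p)" using nn dl by simp
      finally have LN': "real L \<le> real N" using N by linarith
      then have LN: "L \<le> N" by simp
      have Npos: "real N > 0" using N dl n1 by (smt (verit) mult_pos_pos powr_gt_zero)
      have "(\<delta> * real n powr (1/p)) powr p \<le> real N powr p"
        using N dl p by (intro powr_mono2) auto
      moreover have "(\<delta> * real n powr (1/p)) powr p = \<delta> powr p * real n"
        using dl n1 p by (simp add: powr_mult powr_powr)
      ultimately have NP: "\<delta> powr p * real n \<le> real N powr p" by simp
      have Npp: "real N powr p > 0" using Npos by simp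
      have dpp: "\<delta> powr p > 0" using dl by simp
      have nNp: "real n / real N powr p \<le> 1 / \<delta> powr p"
        using NP Npp dpp by (simp add: field_simps)
      have T1: "real n * measure M (S N) \<le> jr / \<delta> powr p"
      proof -
        have "real n * measure M (S N) = real n / real N powr p * (real N powr p * measure M (S N))"
          using Npp by simp
        also have "\<dots> \<le> 1 / \<delta> powr p * jr"
          using nNp bi[OF LN] Npp by (intro mult_mono) auto
        finally show ?thesis by simp
      qed
      have nN: "real n / real N \<le> real n powr (1 - 1/p) / \<delta>"
      proof -
        have "real n / real N \<le> real n / (\<delta> * real n powr (1/p))"
        proof (rule divide_left_mono)
          have "\<delta> * real n powr (1/p) > 0" using dl n1 by simp
          then show "0 < real N * (\<delta> * real n powr (1 / p))" using Npos by simp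
        qed (use N in auto)
        also have "\<dots> = real n powr (1 - 1/p) / \<delta>"
          using n1 by (simp add: powr_diff)
        finally show ?thesis .
      qed
      have T2: "real n * ((\<Sum>k<N. measure M (S k)) / real N) \<le> real L * mu * (real n powr (1 - 1/p) / \<delta>) + jr / \<delta> powr p"
      proof -
        have "real n * ((\<Sum>k<N. measure M (S k)) / real N) \<le> real n / real N * (real L * mu + real N powr (1 - p) * jr)"
          using bii[of N] Npos n1 unfolding mu_def by (simp add: divide_right_mono mult_left_mono)
        also have "\<dots> = real L * mu * (real n / real N) + real n / real N powr p * jr"
          using Npos by (simp add: powr_diff field_simps)
        also have "\<dots> \<le> real L * mu * (real n powr (1 - 1/p) / \<delta>) + 1 / \<delta> powr p * jr"
          using nN nNp mu0 jr0 by (intro add_mono mult_left_mono mult_right_mono) auto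
        finally show ?thesis by simp
      qed
      have A: "jr / \<delta> powr p \<le> \<eta> / 4" using jre dpp unfolding eps_def by (simp add: field_simps)
      have B0: "real L * mu * (real n powr (1 - 1/p) / \<delta>) = real L * mu / \<delta> * real n powr (1 - 1/p)" by simp
      have B: "real L * mu / \<delta> * real n powr (1 - 1/p) < \<eta> / 2" using elim by simp
      have EQ: "real n * (measure M (S N) + (\<Sum>k<N. measure M (S k)) / real N) =
          real n * measure M (S N) + real n * ((\<Sum>k<N. measure M (S k)) / real N)"
        by (simp add: distrib_left)
      have "real n * (measure M (S N) + (\<Sum>k<N. measure M (S k)) / real N) \<le> \<eta>"
        using EQ T1 T2 A B B0 by linarith
      then show "real n * (measure M {x\<in>space M. N < f x} + (\<Sum>k<N. measure M {x\<in>space M. k < f x}) / real N) \<le> \<eta>"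
        unfolding S_def .
    qed
  qed
qed

end

lemma sum_ind_min_real: "(\<Sum>k<N. (if k < a then 1 else 0 :: real)) = real (min a N)"
proof (induction N)
  case 0 then show ?case by simp
next
  case (Suc N)
  show ?case
  proof (cases "N < a")
    case True
    then show ?thesis using Suc by (cases "a = Suc N") (auto simp: min_def)
  next
    case False
    then show ?thesis using Suc by (auto simp: min_def)
  qed
qed

context cpl begin

interpretation G: group G by (rule grpG)
interpretation L: group L by (rule grpL)

lemma c_one: "x \<in> XL \<Longrightarrow> c \<one>\<^bsub>G\<^esub> x = \<one>\<^bsub>L\<^esub>"
proof -
  assume x0: "x \<in> XL"
  then have x: "x \<in> space M" using XL_space by auto
  have "aL \<one>\<^bsub>L\<^esub> (aG \<one>\<^bsub>G\<^esub> x) = x" using aL_one aG_one x by simp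
  then show ?thesis using c_eq[OF G.one_closed x L.one_closed] x0 by simp
qed

lemma word_bound:
  assumes S: "fin_gen_set L S" and ws: "set ws \<subseteq> carrier G" and x0: "x \<in> XL"
  shows "word_len L S (c (wprod G ws) x) \<le>
    (\<Sum>i<length ws. word_len L S (c (ws ! i) (T (wprod G (drop (Suc i) ws)) x)))"
  using ws
proof (induction ws)
  case Nil
  then show ?case using c_one[OF x0] L.word_len_one by simp
next
  case (Cons s ws)
  have s: "s \<in> carrier G" and wsc: "set ws \<subseteq> carrier G" using Cons.prems by auto
  have gc: "wprod G ws \<in> carrier G" using G.wprod_carrier[OF wsc] .
  have x: "x \<in> space M" using x0 XL_space by auto
  have Tx: "T (wprod G ws) x \<in> space M" using T_XL[OF gc x] XL_space by auto
  have "word_len L S (c (wprod G (s # ws)) x) = word_len L S (c s (T (wprod G ws) x) \<otimes>\<^bsub>L\<^esub> c (wprod G ws) x)"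
    using c_mult[OF s gc x] by simp
  also have "\<dots> \<le> word_len L S (c s (T (wprod G ws) x)) + word_len L S (c (wprod G ws) x)"
    using L.word_len_mult[OF S] c_prop[OF s Tx] c_prop[OF gc x] by simp
  also have "\<dots> \<le> word_len L S (c s (T (wprod G ws) x)) +
     (\<Sum>i<length ws. word_len L S (c (ws ! i) (T (wprod G (drop (Suc i) ws)) x)))"
    using Cons.IH[OF wsc] by simp
  also have "\<dots> = (\<Sum>i<length (s # ws). word_len L S (c ((s # ws) ! i) (T (wprod G (drop (Suc i) (s # ws))) x)))"
    unfolding length_Cons sum.lessThan_Suc_shift by simp
  finally show ?case .
qed

lemma dist_eq:
  assumes g: "g \<in> carrier G" and s: "s \<in> carrier G"
  shows "{x \<in> XL. k < word_len L S (c s (T g x))} \<in> sets M \<and>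
     measure M {x \<in> XL. k < word_len L S (c s (T g x))} = measure M {x \<in> XL. k < word_len L S (c s x)}"
proof -
  define B where "B = {x \<in> XL. k < word_len L S (c s x)}"
  have Bs: "B \<in> sets M" unfolding B_def by (rule sets_c[OF s])
  have eq: "{x \<in> XL. k < word_len L S (c s (T g x))} = {x \<in> XL. T g x \<in> B}"
    unfolding B_def using T_XL[OF g] XL_space by auto
  show ?thesis unfolding eq using T_pre[OF g Bs] unfolding B_def by (simp add: measure_def)
qed

lemma sum_tail:
  fixes gf :: "nat \<Rightarrow> 'w \<Rightarrow> nat" and m N :: nat
  assumes N: "N > 0" and meas: "\<And>i k. i < m \<Longrightarrow> {x \<in> XL. k < gf i x} \<in> sets M"
    and A: "A \<in> sets M" "A \<subseteq> {x \<in> XL. N < (\<Sum>i<m. gf i x)}"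
  shows "measure M A \<le> (\<Sum>i<m. measure M {x \<in> XL. N < gf i x})
      + (\<Sum>i<m. \<Sum>k<N. measure M {x \<in> XL. k < gf i x}) / real N"
proof -
  define B where "B i k = {x \<in> XL. k < gf i x}" for i k
  define h where "h x = (\<Sum>i<m. \<Sum>k<N. indicator (B i k) x :: real)" for x
  define C where "C = {x \<in> space M. real N \<le> h x}"
  have Bs: "i < m \<Longrightarrow> B i k \<in> sets M" for i k unfolding B_def using meas by simp
  have Bf: "i < m \<Longrightarrow> emeasure M (B i k) < \<infinity>" for i k
    using fmeas[OF Bs] unfolding B_def by (auto simp: fmeasurable_def)
  have hm: "h \<in> borel_measurable M" unfolding h_def using Bs
    by (intro borel_measurable_sum) (auto intro: borel_measurable_indicator)
  have Cs: "C \<in> sets M" unfolding C_def using hm by measurable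
  have hint: "integrable M h" unfolding h_def using Bs Bf
    by (intro Bochner_Integration.integrable_sum integrable_real_indicator) auto
  have hintv: "integral\<^sup>L M h = (\<Sum>i<m. \<Sum>k<N. measure M (B i k))"
    unfolding h_def using Bs Bf
    by (simp add: Bochner_Integration.integral_sum Bochner_Integration.integrable_sum integrable_real_indicator)
  have MC: "measure M C \<le> (\<Sum>i<m. \<Sum>k<N. measure M (B i k)) / real N"
  proof -
    have "measure M {x \<in> space M. real N \<le> h x} \<le> integral\<^sup>L M h / real N"
    proof (rule integral_Markov_inequality_measure[OF hint sets.top])
      have "\<And>x. h x \<ge> 0" unfolding h_def by (intro sum_nonneg) auto
      then show "AE x in M. 0 \<le> h x" by simp
    qed (use N in simp)
    then show ?thesis unfolding C_def hintv .
  qed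
  have sub: "A \<subseteq> (\<Union>i<m. B i N) \<union> C"
  proof
    fix x assume xA: "x \<in> A"
    then have x: "x \<in> XL" "N < (\<Sum>i<m. gf i x)" using A by auto
    show "x \<in> (\<Union>i<m. B i N) \<union> C"
    proof (cases "\<exists>i<m. N < gf i x")
      case True
      then show ?thesis using x unfolding B_def by auto
    next
      case False
      have "h x = (\<Sum>i<m. real (min (gf i x) N))"
        unfolding h_def
      proof (intro sum.cong refl)
        fix i assume "i \<in> {..<m}"
        have "(\<Sum>k<N. indicator (B i k) x :: real) = (\<Sum>k<N. (if k < gf i x then 1 else 0 :: real))"
          using x unfolding B_def by (intro sum.cong) (auto simp: indicator_def)
        then show "(\<Sum>k<N. indicator (B i k) x :: real) = real (min (gf i x) N)"
          by (simp add: sum_ind_min_real)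
      qed
      also have "\<dots> = (\<Sum>i<m. real (gf i x))"
        using False by (intro sum.cong) auto
      also have "\<dots> = real (\<Sum>i<m. gf i x)" by simp
      finally have "real N \<le> h x" using x(2) by linarith
      then show ?thesis using x XL_space unfolding C_def by auto
    qed
  qed
  have UBs: "(\<Union>i<m. B i N) \<in> sets M" using Bs by (intro sets.finite_UN) auto
  have CX: "C \<subseteq> XL"
  proof
    fix x assume x: "x \<in> C"
    show "x \<in> XL"
    proof (rule ccontr)
      assume "x \<notin> XL"
      then have "h x = 0" unfolding h_def B_def by (simp add: indicator_def)
      then show False using x N unfolding C_def by simp
    qed
  qed
  have "measure M A \<le> measure M ((\<Union>i<m. B i N) \<union> C)"
  proof (rule measure_mono_fmeasurable[OF sub A(1)])
    show "(\<Union>i<m. B i N) \<union> C \<in> fmeasurable M"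
      using UBs Cs CX by (intro fmeas) (auto simp: B_def)
  qed
  also have "\<dots> \<le> measure M (\<Union>i<m. B i N) + measure M C" by (rule measure_Un_le[OF UBs Cs])
  also have "\<dots> \<le> (\<Sum>i<m. measure M (B i N)) + (\<Sum>i<m. \<Sum>k<N. measure M (B i k)) / real N"
    using MC Bs by (intro add_mono measure_UNION_le) auto
  finally show ?thesis unfolding B_def .
qed

end

context cpl begin

interpretation G: group G by (rule grpG)
interpretation L: group L by (rule grpL)

lemma word_tail:
  assumes S: "fin_gen_set L S" and W: "W \<subseteq> carrier G" "finite W"
    and ws: "set ws \<subseteq> W" "length ws \<le> n" and N: "N > 0"
  shows "measure M {x \<in> XL. N < word_len L S (c (wprod G ws) x)} \<le>
    real n * (\<Sum>s\<in>W. measure M {x \<in> XL. N < word_len L S (c s x)}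
       + (\<Sum>k<N. measure M {x \<in> XL. k < word_len L S (c s x)}) / real N)"
proof -
  define m where "m = length ws"
  define gf where "gf i x = word_len L S (c (ws ! i) (T (wprod G (drop (Suc i) ws)) x))" for i x
  define \<Phi> where "\<Phi> s = measure M {x \<in> XL. N < word_len L S (c s x)}
       + (\<Sum>k<N. measure M {x \<in> XL. k < word_len L S (c s x)}) / real N" for s
  have wsc: "set ws \<subseteq> carrier G" using ws W by auto
  have wi: "i < m \<Longrightarrow> ws ! i \<in> carrier G" for i unfolding m_def using wsc nth_mem by blast
  have di: "wprod G (drop (Suc i) ws) \<in> carrier G" for i
    using wsc by (intro G.wprod_carrier) (meson order.trans set_drop_subset)
  have meas: "i < m \<Longrightarrow> {x \<in> XL. k < gf i x} \<in> sets M" for i k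
    unfolding gf_def using dist_eq[OF di wi] by blast
  have gc: "wprod G ws \<in> carrier G" using G.wprod_carrier[OF wsc] .
  have As: "{x \<in> XL. N < word_len L S (c (wprod G ws) x)} \<in> sets M" by (rule sets_c[OF gc])
  have Asub: "{x \<in> XL. N < word_len L S (c (wprod G ws) x)} \<subseteq> {x \<in> XL. N < (\<Sum>i<m. gf i x)}"
    using word_bound[OF S wsc] unfolding gf_def m_def by (auto intro: less_le_trans)
  have "measure M {x \<in> XL. N < word_len L S (c (wprod G ws) x)} \<le>
      (\<Sum>i<m. measure M {x \<in> XL. N < gf i x}) + (\<Sum>i<m. \<Sum>k<N. measure M {x \<in> XL. k < gf i x}) / real N"
    by (rule sum_tail[OF N meas As Asub])
  also have "\<dots> = (\<Sum>i<m. \<Phi> (ws ! i))"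
  proof -
    have e: "i < m \<Longrightarrow> measure M {x \<in> XL. k < gf i x} = measure M {x \<in> XL. k < word_len L S (c (ws ! i) x)}" for i k
      unfolding gf_def using dist_eq[OF di wi] by blast
    show ?thesis unfolding \<Phi>_def
      by (simp add: e sum.distrib sum_divide_distrib)
  qed
  also have "\<dots> \<le> (\<Sum>i<m. \<Sum>s\<in>W. \<Phi> s)"
  proof (intro sum_mono)
    fix i assume "i \<in> {..<m}"
    then have "ws ! i \<in> W" using ws unfolding m_def by auto
    moreover have "\<And>s. 0 \<le> \<Phi> s" unfolding \<Phi>_def by (auto intro!: add_nonneg_nonneg divide_nonneg_nonneg sum_nonneg)
    ultimately show "\<Phi> (ws ! i) \<le> (\<Sum>s\<in>W. \<Phi> s)" using W(2) by (intro member_le_sum) auto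
  qed
  also have "\<dots> = real m * (\<Sum>s\<in>W. \<Phi> s)" by simp
  also have "\<dots> \<le> real n * (\<Sum>s\<in>W. \<Phi> s)"
  proof (rule mult_right_mono)
    show "real m \<le> real n" using ws unfolding m_def by simp
    have "\<And>s. 0 \<le> \<Phi> s" unfolding \<Phi>_def by (auto intro!: add_nonneg_nonneg divide_nonneg_nonneg sum_nonneg)
    then show "0 \<le> (\<Sum>s\<in>W. \<Phi> s)" by (intro sum_nonneg) auto
  qed
  finally show ?thesis unfolding \<Phi>_def .
qed

end

lemma growth_nonneg: "growth G S x \<ge> 0" unfolding growth_def by simp

lemma (in group) growth_ge1:
  assumes "fin_gen_set G S" "x \<ge> 0"
  shows "growth G S x \<ge> 1"
proof -
  have "\<one> \<in> {g \<in> carrier G. real (word_len G S g) \<le> x}" using assms word_len_one by simp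
  then have "card {g \<in> carrier G. real (word_len G S g) \<le> x} \<noteq> 0" using ball_finite[OF assms(1)] by auto
  then show ?thesis unfolding growth_def by simp
qed

lemma (in group) growth_compare:
  assumes S: "fin_gen_set G S" and S': "fin_gen_set G S'" and D: "\<forall>g\<in>carrier G. word_len G S' g \<le> D * word_len G S g"
    and r: "r \<ge> 0"
  shows "growth G S r \<le> growth G S' (real D * r)"
proof -
  have "{g \<in> carrier G. real (word_len G S g) \<le> r} \<subseteq> {g \<in> carrier G. real (word_len G S' g) \<le> real D * r}"
  proof safe
    fix g assume g: "g \<in> carrier G" "real (word_len G S g) \<le> r"
    have "real (word_len G S' g) \<le> real D * real (word_len G S g)" using D g by (metis of_nat_le_iff of_nat_mult)
    also have "\<dots> \<le> real D * r" using g by (intro mult_left_mono) auto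
    finally show "real (word_len G S' g) \<le> real D * r" .
  qed
  then show ?thesis unfolding growth_def using ball_finite[OF S'] by (simp add: card_mono)
qed

lemma (in group) growth_lower:
  assumes S: "fin_gen_set G S" and dom: "asymp_dominated (\<lambda>x. x powr b) (growth G S)"
  shows "\<exists>\<kappa>>0. \<forall>\<^sub>F n in sequentially. \<kappa> * real n powr b \<le> growth G S (real n)"
proof -
  obtain C where C: "C > 0" "(\<lambda>x. x powr b) \<in> O[at_top](\<lambda>x. growth G S (C * x))"
    using dom unfolding asymp_dominated_def by blast
  obtain k where k: "k > 0" "\<forall>\<^sub>F x in at_top. norm (x powr b) \<le> k * norm (growth G S (C * x))"
    using C(2) by (elim landau_o.bigE) auto
  have lim: "filterlim (\<lambda>n. (1 / C) * real n) at_top sequentially"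
    using C by (intro filterlim_tendsto_pos_mult_at_top[OF tendsto_const] filterlim_real_sequentially) auto
  have ev: "\<forall>\<^sub>F n in sequentially. norm (((1/C) * real n) powr b) \<le> k * norm (growth G S (C * ((1/C) * real n)))"
    using eventually_compose_filterlim[OF k(2) lim] .
  show ?thesis
  proof (intro exI[of _ "1 / (k * C powr b)"] conjI)
    show "1 / (k * C powr b) > 0" using k C by simp
    show "\<forall>\<^sub>F n in sequentially. 1 / (k * C powr b) * real n powr b \<le> growth G S (real n)"
      using ev
    proof eventually_elim
      case (elim n)
      have "C * ((1/C) * real n) = real n" using C by simp
      moreover have "((1/C) * real n) powr b = real n powr b / C powr b"
        using C by (simp add: powr_divide[symmetric])
      ultimately have "real n powr b / C powr b \<le> k * growth G S (real n)"
        using elim growth_nonneg[of G S] by simp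
      then show ?case using k C by (simp add: field_simps)
    qed
  qed
qed

lemma growth_upper:
  assumes dom: "asymp_dominated (growth L S) (\<lambda>x. x powr a)"
  shows "\<exists>\<kappa>>0. \<forall>\<^sub>F x in at_top. growth L S x \<le> \<kappa> * x powr a"
proof -
  obtain C where C: "C > 0" "growth L S \<in> O[at_top](\<lambda>x. (C * x) powr a)"
    using dom unfolding asymp_dominated_def by blast
  obtain k where k: "k > 0" "\<forall>\<^sub>F x in at_top. norm (growth L S x) \<le> k * norm ((C * x) powr a)"
    using C(2) by (elim landau_o.bigE) auto
  show ?thesis
  proof (intro exI[of _ "k * C powr a"] conjI)
    show "k * C powr a > 0" using k C by simp
    show "\<forall>\<^sub>F x in at_top. growth L S x \<le> k * C powr a * x powr a"
      using k(2) eventually_gt_at_top[of 0]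
    proof eventually_elim
      case (elim x)
      then show ?case using C growth_nonneg[of L S x] by (simp add: powr_mult)
    qed
  qed
qed

lemma ev_ex_real: "\<forall>\<^sub>F x in at_top. P (x::real) \<Longrightarrow> \<exists>x. P x"
  unfolding eventually_at_top_linorder by blast

lemma ev_ex_nat: "\<forall>\<^sub>F x in sequentially. P (x::nat) \<Longrightarrow> \<exists>x. P x"
  unfolding eventually_sequentially by blast

lemma main_contra:
  fixes G :: "'a monoid" and L :: "'b monoid" and a b :: real and S :: "'b set"
    and M :: "'w measure" and aG aL XG XL
  assumes grpG: "group G" and grpL: "group L"
    and pgG: "poly_growth_deg G b" and pgL: "poly_growth_deg L a" and ba: "b > a"
    and S: "fin_gen_set L S"
    and cp: "Lp_L0_coupling G L S (a / b) M aG aL XG XL"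
  shows False
proof -
  interpret G: group G by (rule grpG)
  interpret L: group L by (rule grpL)
  obtain SG where SG: "fin_gen_set G SG" "asymp_approx (growth G SG) (\<lambda>x. x powr b)"
    using pgG unfolding poly_growth_deg_def by blast
  obtain SL where SL: "fin_gen_set L SL" "asymp_approx (growth L SL) (\<lambda>x. x powr a)"
    using pgL unfolding poly_growth_deg_def by blast
  have me: "me_coupling G L M aG aL XG XL"
    and Lp: "\<And>g. g \<in> carrier G \<Longrightarrow> in_Lp (restrict_space M XL) (a / b)
        (\<lambda>x. real (word_len L S (cocycle L aL aG XL g x)))"
    using cp unfolding Lp_L0_coupling_def by auto
  interpret C: cpl G L M aG aL XG XL
    using grpG grpL me G.carrier_countable[OF SG(1)] L.carrier_countable[OF SL(1)]
    by unfold_locales auto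
  obtain \<kappa>1 where k1: "\<kappa>1 > 0" "\<forall>\<^sub>F n in sequentially. \<kappa>1 * real n powr b \<le> growth G SG (real n)"
    using G.growth_lower[OF SG(1)] SG(2) unfolding asymp_approx_def by blast
  obtain \<kappa>2 where k2: "\<kappa>2 > 0" "\<forall>\<^sub>F x in at_top. growth L SL x \<le> \<kappa>2 * x powr a"
    using growth_upper SL(2) unfolding asymp_approx_def by blast
  obtain R1 where R1: "\<And>x. x \<ge> R1 \<Longrightarrow> growth L SL x \<le> \<kappa>2 * x powr a"
    using k2(2) unfolding eventually_at_top_linorder by blast
  obtain D :: nat where D: "D > 0" "\<forall>g\<in>carrier L. word_len L SL g \<le> D * word_len L S g"
    using L.word_len_compare[OF S SL(1)] by blast
  have a0: "a \<ge> 0"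
  proof (rule ccontr)
    assume "\<not> a \<ge> 0"
    then have an: "a < 0" by simp
    have "((\<lambda>x. \<kappa>2 * x powr a) \<longlongrightarrow> \<kappa>2 * 0) at_top"
      by (intro tendsto_mult tendsto_const tendsto_neg_powr[OF an filterlim_ident])
    then have "\<forall>\<^sub>F x in at_top. \<kappa>2 * x powr a < 1" by (intro order_tendstoD(2)) auto
    with k2(2) eventually_ge_at_top[of "0::real"]
    have "\<forall>\<^sub>F x in at_top. growth L SL x \<le> \<kappa>2 * x powr a \<and> 0 \<le> x \<and> \<kappa>2 * x powr a < 1"
      by (intro eventually_conj)
    then obtain x where "growth L SL x \<le> \<kappa>2 * x powr a" "0 \<le> x" "\<kappa>2 * x powr a < 1"
      using ev_ex_real by blast
    then show False using L.growth_ge1[OF SL(1), of x] by simp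
  qed
  have b0: "b > 0" using a0 ba by simp
  obtain d where d: "d \<in> carrier G" "emeasure M (C.G0 d) > 0" using C.G0_exists by blast
  define m0 where "m0 = measure M (C.G0 d)"
  define mX where "mX = measure M XL"
  have G0f: "C.G0 d \<in> fmeasurable M" using C.fmeas[OF C.G0_sets[OF d(1)] C.G0_sub] .
  have m0: "m0 > 0" using d(2) emeasure_eq_measure2[OF G0f] unfolding m0_def by simp
  have mX: "mX \<ge> m0" unfolding mX_def m0_def
    using C.G0_sub C.G0_sets[OF d(1)] C.fmeas[OF C.XL_sets order.refl] by (intro measure_mono_fmeasurable) auto
  define \<kappa>3 where "\<kappa>3 = \<kappa>2 * real D powr a"
  have k3: "\<kappa>3 > 0" unfolding \<kappa>3_def using k2 D by simp
  have gL: "growth L S r \<le> \<kappa>3 * r powr a" if r: "r \<ge> max R1 1" for r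
  proof -
    have "growth L S r \<le> growth L SL (real D * r)" using L.growth_compare[OF S SL(1) D(2)] r by simp
    also have "\<dots> \<le> \<kappa>2 * (real D * r) powr a"
    proof (rule R1)
      have "1 * r \<le> real D * r" using D r by (intro mult_right_mono) auto
      moreover have "R1 \<le> r" using r by simp
      ultimately show "R1 \<le> real D * r" by linarith
    qed
    also have "\<dots> = \<kappa>3 * r powr a" unfolding \<kappa>3_def using r by (simp add: powr_mult)
    finally show ?thesis .
  qed
  show False
  proof (cases "a = 0")
    case True
    have finL: "finite (carrier L)"
    proof (rule ccontr)
      assume "infinite (carrier L)"
      then obtain B where B: "finite B" "card B = nat \<lceil>\<kappa>3\<rceil> + 1" "B \<subseteq> carrier L"
        using infinite_arbitrarily_large by blast
      define R where "R = max R1 1 + (\<Sum>l\<in>B. real (word_len L S l))"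
      have R: "R \<ge> max R1 1" unfolding R_def by (simp add: sum_nonneg)
      have "B \<subseteq> {g \<in> carrier L. real (word_len L S g) \<le> R}"
      proof
        fix l assume l: "l \<in> B"
        have "real (word_len L S l) \<le> (\<Sum>l\<in>B. real (word_len L S l))"
          using l B(1) by (intro member_le_sum) auto
        then show "l \<in> {g \<in> carrier L. real (word_len L S g) \<le> R}" using l B(3) R unfolding R_def by auto
      qed
      then have "real (card B) \<le> growth L S R"
        unfolding growth_def using L.ball_finite[OF S] card_mono by (metis of_nat_le_iff)
      also have "\<dots> \<le> \<kappa>3 * R powr a" using gL[OF R] .
      also have "\<dots> = \<kappa>3" using True R by simp
      finally have "real (card B) \<le> \<kappa>3" .
      moreover have "real (card B) > \<kappa>3" using B(2) by linarith
      ultimately show False by simp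
    qed
    define K where "K = 2 * real (card (carrier L)) * mX / m0"
    have bound: "growth G SG (real n) \<le> K" for n :: nat
    proof -
      define F where "F = {g \<in> carrier G. real (word_len G SG g) \<le> real n}"
      have "real (card F) * (m0 / 2) \<le> real (card (carrier L)) * mX"
        unfolding m0_def mX_def
      proof (rule C.fiber_main[OF d(1) _ _ finL order.refl])
        show "finite F" unfolding F_def by (rule G.ball_finite[OF SG(1)])
        show "F \<subseteq> carrier G" unfolding F_def by auto
        fix g assume "g \<in> F"
        then have g: "g \<in> carrier G" unfolding F_def by auto
        have "{x \<in> C.G0 d. C.c g x \<notin> carrier L} = {}"
          using C.c_prop[OF g] C.G0_sub C.XL_space by auto
        then have "measure M {x \<in> C.G0 d. C.c g x \<notin> carrier L} = 0" by (simp only: measure_empty)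
        then show "measure M {x \<in> C.G0 d. C.c g x \<notin> carrier L} \<le> measure M (C.G0 d) / 2"
          using m0 unfolding m0_def by simp
      qed
      then have "real (card F) \<le> K" unfolding K_def using m0 by (simp add: field_simps)
      then show ?thesis unfolding growth_def F_def .
    qed
    have "filterlim (\<lambda>n. \<kappa>1 * real n powr b) at_top sequentially"
      by (intro filterlim_tendsto_pos_mult_at_top[OF tendsto_const k1(1)]
          filterlim_compose[OF real_powr_at_top[OF b0] filterlim_real_sequentially])
    then have "\<forall>\<^sub>F n in sequentially. K < \<kappa>1 * real n powr b" by (simp add: filterlim_at_top_dense)
    with k1(2) have "\<forall>\<^sub>F n in sequentially. \<kappa>1 * real n powr b \<le> growth G SG (real n) \<and> K < \<kappa>1 * real n powr b"
      by (intro eventually_conj)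
    then obtain n where "\<kappa>1 * real n powr b \<le> growth G SG (real n)" "K < \<kappa>1 * real n powr b"
      using ev_ex_nat by blast
    then show False using bound[of n] by simp
  next
    case False
    then have apos: "a > 0" using a0 by simp
    define p where "p = a / b"
    have p: "0 < p" "p < 1" unfolding p_def using apos ba b0 by (auto simp: field_simps)
    define Q where "Q = 2 * mX / m0"
    have Q: "Q > 0" unfolding Q_def using m0 mX by simp
    define X where "X = \<kappa>1 / (4 * Q * \<kappa>3)"
    have X: "X > 0" unfolding X_def using k1 Q k3 by simp
    define \<delta> where "\<delta> = X powr (1/a) / 2"
    have dl: "\<delta> > 0" unfolding \<delta>_def using X by simp
    have da: "(2 * \<delta>) powr a = X"
      unfolding \<delta>_def using X apos by (simp add: powr_powr)
    define W where "W = gens G SG"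
    have W: "W \<subseteq> carrier G" "finite W" unfolding W_def
      using G.gens_carrier G.gens_finite SG(1) unfolding fin_gen_set_def by auto
    define \<eta> where "\<eta> = m0 / (2 * (real (card W) + 1))"
    have et: "\<eta> > 0" unfolding \<eta>_def using m0 by simp
    define MX where "MX = restrict_space M XL"
    have XLs: "XL \<inter> space M \<in> sets M" using C.XL_sets C.XL_space by (simp add: Int_absorb2)
    have spMX: "space MX = XL" unfolding MX_def space_restrict_space using C.XL_space by auto
    have finMX: "finite_measure MX"
    proof (rule finite_measureI)
      have "emeasure MX (space MX) = emeasure M XL"
        unfolding spMX unfolding MX_def by (rule emeasure_restrict_space[OF XLs order.refl])
      then show "emeasure MX (space MX) \<noteq> \<infinity>" using C.XL_fin by simp
    qed
    have measMX: "measure MX A = measure M A" if "A \<subseteq> XL" for A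
      unfolding MX_def using measure_restrict_space[OF XLs that] .
    have tail: "\<forall>\<^sub>F n in sequentially. \<forall>N::nat. \<delta> * real n powr (1/p) \<le> real N \<longrightarrow>
        real n * (measure M {x\<in>XL. N < word_len L S (C.c s x)}
          + (\<Sum>k<N. measure M {x\<in>XL. k < word_len L S (C.c s x)}) / real N) \<le> \<eta>"
      if s: "s \<in> W" for s
    proof -
      have sc: "s \<in> carrier G" using s W by auto
      have "in_Lp MX p (\<lambda>x. real (word_len L S (C.c s x)))"
        using Lp[OF sc] unfolding MX_def p_def C.c_def by simp
      then have fm: "(\<lambda>x. real (word_len L S (C.c s x))) \<in> borel_measurable MX"
        and int: "(\<integral>\<^sup>+ x. ennreal (real (word_len L S (C.c s x)) powr p) \<partial>MX) < \<infinity>"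
        unfolding in_Lp_def using p by auto
      have "\<forall>\<^sub>F n in sequentially. \<forall>N::nat. \<delta> * real n powr (1/p) \<le> real N \<longrightarrow>
        real n * (measure MX {x\<in>space MX. N < word_len L S (C.c s x)}
          + (\<Sum>k<N. measure MX {x\<in>space MX. k < word_len L S (C.c s x)}) / real N) \<le> \<eta>"
        by (rule finite_measure.tail_lemma[OF finMX fm p int dl et])
      moreover have "measure MX {x\<in>space MX. k < word_len L S (C.c s x)} = measure M {x\<in>XL. k < word_len L S (C.c s x)}" for k
        unfolding spMX by (rule measMX) auto
      ultimately show ?thesis by simp
    qed
    have tailW: "\<forall>\<^sub>F n in sequentially. \<forall>s\<in>W. \<forall>N::nat. \<delta> * real n powr (1/p) \<le> real N \<longrightarrow>
        real n * (measure M {x\<in>XL. N < word_len L S (C.c s x)}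
          + (\<Sum>k<N. measure M {x\<in>XL. k < word_len L S (C.c s x)}) / real N) \<le> \<eta>"
      using tail W(2) by (intro eventually_ball_finite) auto
    have "filterlim (\<lambda>n. \<delta> * real n powr (1/p)) at_top sequentially"
      using p by (intro filterlim_tendsto_pos_mult_at_top[OF tendsto_const dl]
          filterlim_compose[OF real_powr_at_top filterlim_real_sequentially]) auto
    then have evN: "\<forall>\<^sub>F n in sequentially. max R1 1 \<le> \<delta> * real n powr (1/p)"
      unfolding filterlim_at_top by (rule spec)
    have "\<forall>\<^sub>F n in sequentially. (\<forall>s\<in>W. \<forall>N::nat. \<delta> * real n powr (1/p) \<le> real N \<longrightarrow>
        real n * (measure M {x\<in>XL. N < word_len L S (C.c s x)}
          + (\<Sum>k<N. measure M {x\<in>XL. k < word_len L S (C.c s x)}) / real N) \<le> \<eta>)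
        \<and> max R1 1 \<le> \<delta> * real n powr (1/p) \<and> \<kappa>1 * real n powr b \<le> growth G SG (real n) \<and> n \<ge> 1"
      using tailW evN k1(2) eventually_ge_at_top[of "1::nat"] by (intro eventually_conj)
    then obtain n where n: "\<forall>s\<in>W. \<forall>N::nat. \<delta> * real n powr (1/p) \<le> real N \<longrightarrow>
        real n * (measure M {x\<in>XL. N < word_len L S (C.c s x)}
          + (\<Sum>k<N. measure M {x\<in>XL. k < word_len L S (C.c s x)}) / real N) \<le> \<eta>"
      "max R1 1 \<le> \<delta> * real n powr (1/p)" "\<kappa>1 * real n powr b \<le> growth G SG (real n)" "n \<ge> 1"
      using ev_ex_nat by blast
    define y where "y = \<delta> * real n powr (1/p)"
    have y1: "y \<ge> 1" "y \<ge> R1" using n(2) unfolding y_def by auto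
    define N where "N = nat \<lceil>y\<rceil>"
    have N1: "y \<le> real N" unfolding N_def by (rule real_nat_ceiling_ge)
    have "real N = of_int \<lceil>y\<rceil>" unfolding N_def using y1 by simp
    then have N2: "real N \<le> 2 * y" using y1 of_int_ceiling_le_add_one[of y] by linarith
    have Npos: "N > 0" using N1 y1 by simp
    define F where "F = {g \<in> carrier G. real (word_len G SG g) \<le> real n}"
    define E where "E = {l \<in> carrier L. real (word_len L S l) \<le> real N}"
    have "real (card F) * (m0 / 2) \<le> real (card E) * mX"
      unfolding m0_def mX_def
    proof (rule C.fiber_main[OF d(1)])
      show "finite F" unfolding F_def by (rule G.ball_finite[OF SG(1)])
      show "F \<subseteq> carrier G" unfolding F_def by auto
      show "finite E" unfolding E_def by (rule L.ball_finite[OF S])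
      show "E \<subseteq> carrier L" unfolding E_def by auto
      fix g assume "g \<in> F"
      then have g: "g \<in> carrier G" "word_len G SG g \<le> n" unfolding F_def by auto
      obtain ws where ws: "length ws = word_len G SG g" "set ws \<subseteq> W" "wprod G ws = g"
        using G.word_len_word[OF SG(1) g(1)] unfolding W_def by blast
      have sub: "{x \<in> C.G0 d. C.c g x \<notin> E} \<subseteq> {x \<in> XL. N < word_len L S (C.c g x)}"
      proof
        fix x assume x: "x \<in> {x \<in> C.G0 d. C.c g x \<notin> E}"
        then have xs: "x \<in> XL" "x \<in> space M" using C.G0_sub C.XL_space by auto
        have "C.c g x \<in> carrier L" using C.c_prop[OF g(1) xs(2)] by simp
        then show "x \<in> {x \<in> XL. N < word_len L S (C.c g x)}" using x xs unfolding E_def by auto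
      qed
      have "measure M {x \<in> C.G0 d. C.c g x \<notin> E} \<le> measure M {x \<in> XL. N < word_len L S (C.c g x)}"
        using sub C.sets_G0c[OF d(1) g(1)] C.fmeas[OF C.sets_c[OF g(1)]]
        by (intro measure_mono_fmeasurable) auto
      also have "\<dots> \<le> real n * (\<Sum>s\<in>W. measure M {x \<in> XL. N < word_len L S (C.c s x)}
          + (\<Sum>k<N. measure M {x \<in> XL. k < word_len L S (C.c s x)}) / real N)"
        using C.word_tail[OF S W ws(2) _ Npos, of n] ws(1,3) g(2) by simp
      also have "\<dots> = (\<Sum>s\<in>W. real n * (measure M {x \<in> XL. N < word_len L S (C.c s x)}
          + (\<Sum>k<N. measure M {x \<in> XL. k < word_len L S (C.c s x)}) / real N))"
        by (simp add: sum_distrib_left)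
      also have "\<dots> \<le> (\<Sum>s\<in>W. \<eta>)"
        using n(1) N1 unfolding y_def by (intro sum_mono) auto
      also have "\<dots> = real (card W) * \<eta>" by simp
      also have "\<dots> \<le> m0 / 2"
        unfolding \<eta>_def using m0 by (simp add: field_simps)
      finally show "measure M {x \<in> C.G0 d. C.c g x \<notin> E} \<le> measure M (C.G0 d) / 2"
        unfolding m0_def .
    qed
    then have cF: "real (card F) \<le> Q * real (card E)"
      unfolding Q_def using m0 by (simp add: field_simps)
    have cFg: "real (card F) = growth G SG (real n)" unfolding F_def growth_def ..
    have cEg: "real (card E) = growth L S (real N)" unfolding E_def growth_def ..
    have "real (card E) \<le> \<kappa>3 * real N powr a"
      unfolding cEg using gL N1 y1 by simp
    also have "\<dots> \<le> \<kappa>3 * (2 * y) powr a"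
      using N2 N1 y1 k3 apos by (intro mult_left_mono powr_mono2) auto
    also have "(2 * y) powr a = X * real n powr b"
    proof -
      have "(2 * y) = (2 * \<delta>) * real n powr (1/p)" unfolding y_def by simp
      then have "(2 * y) powr a = (2 * \<delta>) powr a * (real n powr (1/p)) powr a"
        using dl by (simp add: powr_mult)
      also have "(real n powr (1/p)) powr a = real n powr b"
        using apos b0 unfolding p_def by (simp add: powr_powr)
      finally show ?thesis using da by simp
    qed
    finally have cE: "real (card E) \<le> \<kappa>3 * (X * real n powr b)" .
    have nb: "real n powr b > 0" using n(4) by simp
    have "\<kappa>1 * real n powr b \<le> Q * (\<kappa>3 * (X * real n powr b))"
      using n(3) cF cE Q unfolding cFg[symmetric] by (smt (verit) mult_left_mono)
    also have "\<dots> = \<kappa>1 / 4 * real n powr b"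
      unfolding X_def using Q k3 by (simp add: field_simps)
    finally show False using k1(1) nb by simp
  qed
qed

theorem corollary4p3:
  fixes G :: "'a monoid" and L :: "'b monoid" and a b :: real and S :: "'b set"
  assumes "group G" and "group L"
    and "poly_growth_deg G b" and "poly_growth_deg L a" and "b > a"
    and "fin_gen_set L S"
  shows "\<not> (\<exists>(M :: 'w measure) aG aL XG XL. Lp_L0_coupling G L S (a / b) M aG aL XG XL)"
proof
  assume "\<exists>(M :: 'w measure) aG aL XG XL. Lp_L0_coupling G L S (a / b) M aG aL XG XL"
  then obtain M :: "'w measure" and aG aL XG XL where "Lp_L0_coupling G L S (a / b) M aG aL XG XL"
    by blast
  then show False by (rule main_contra[OF assms])
qed

end
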